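(* Assume the standing assumptions (A1)–(A5) below, and in addition that $|\eta|>0$ on $E$ and $f\in C^2(E;[0,\infty))$. Let $h\in C^2(F)$, where $F=E\times(0,\infty)$. Set $\phi(z,x)=p(z)h(z,x)$ and $\psi(z,x)=\int_0^xh(z,y)\,dy$. Let $\tilde L^R$ be the formal adjoint of $L^R$. Then $\tilde L^R\phi=p\,\partial_x(L\psi)$. In particular, if $L\psi=0$ then $\tilde L^R\phi=0$.
   Context: Let $d,k\ge1$, $\gamma\in(0,1]$, and let $E\subseteq\mathbb R^d$ be open and connected. The standing assumptions are: (A1) there are open, connected, bounded sets $E_n$ with $C^{2,\gamma}$ boundaries, $\bar E_n\subset E_{n+1}$ and $\bigcup E_n=E$; (A2) $m\in C^{1,\gamma}(E;\mathbb R^d)$ and $c\in C^{2,\gamma}(E;\mathbb S^d_{++})$; (A3) the martingale problem for $L^Z=\tfrac12c^{ij}\partial^2_{ij}+m^i\partial_i$ on $E$ is well posed with a recurrent solution, and there is a strictly positive $p\in C^{2,\gamma}(E)$ with $\int_Ep=1$ and $\tilde L^Zp=0$, where $\tilde L^Z=\tfrac12c^{ij}\partial^2_{ij}-(m^i-\partial_jc^{ij})\partial_i-(\partial_im^i-\tfrac12\partial^2_{ij}c^{ij})$; (A4) $a\in C^{1,\gamma}(E;[0,\infty))$, $\eta\in C^{2,\gamma}(E;\mathbb R^k)$, $\theta\in C^{2,\gamma}(E;\mathbb R^d)$; (A5) $f:E\to[0,\infty)$ with $0<\int fp<\infty$, and for some $\varepsilon>0$, $\big(a+\tfrac{1-\varepsilon}2(\theta'c\theta+\eta'\eta)\big)_-\in\mathbb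 L^1(E,p)$ with positive $p$-integral of $a+\tfrac{1-\varepsilon}2(\theta'c\theta+\eta'\eta)$. For $(z,x)\in F$, let $A(z,x)$ be the $(d+1)\times(d+1)$ symmetric block matrix with blocks $c(z)$, $xc\theta(z)$, $x\theta'c(z)$ and $x^2(\theta'c\theta+\eta'\eta)(z)$. Let $b(z,x)=(m(z),\,-f(z)+x(a+\theta'c\theta+\eta'\eta)(z))$, and let $b^R(z,x)=\big((c\nabla p/p+\operatorname{div}c-m)(z),\ f(z)-x(a-\theta'c\nabla p/p-\nabla\cdot(c\theta))(z)\big)$. Then $L=\tfrac12A^{ij}\partial^2_{ij}+b^i\partial_i$ and $L^R=\tfrac12A^{ij}\partial^2_{ij}+(b^R)^i\partial_i$, with derivatives taken in the variables $(z,x)$ and summation over repeated indices. Here $(\operatorname{div}c)^i=\sum_j\partial_jc^{ij}$ and $\nabla\cdot$ is the vector divergence. *)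

theory Defs
  imports "HOL-Analysis.Analysis"
begin

definition pd :: "'d::finite \<Rightarrow> (real^'d \<Rightarrow> real) \<Rightarrow> real^'d \<Rightarrow> real" where
  "pd i g z = deriv (\<lambda>t. g (z + t *\<^sub>R axis i 1)) 0"

fun pds :: "'d::finite list \<Rightarrow> (real^'d \<Rightarrow> real) \<Rightarrow> real^'d \<Rightarrow> real" where
  "pds [] g = g"
| "pds (i # is) g = pd i (pds is g)"

fun Ck :: "nat \<Rightarrow> (real^'d::finite) set \<Rightarrow> (real^'d \<Rightarrow> real) \<Rightarrow> bool" where
  "Ck 0 S g \<longleftrightarrow> continuous_on S g"
| "Ck (Suc k) S g \<longleftrightarrow> g differentiable_on S \<and> (\<forall>i. Ck k S (pd i g))"

definition loc_holder :: "real \<Rightarrow> (real^'d::finite) set \<Rightarrow> (real^'d \<Rightarrow> real) \<Rightarrow> bool" where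
  "loc_holder \<gamma> S g \<longleftrightarrow>
     (\<forall>K. compact K \<and> K \<subseteq> S \<longrightarrow>
        (\<exists>L. \<forall>x\<in>K. \<forall>y\<in>K. \<bar>g x - g y\<bar> \<le> L * dist x y powr \<gamma>))"

definition Ckg :: "nat \<Rightarrow> real \<Rightarrow> (real^'d::finite) set \<Rightarrow> (real^'d \<Rightarrow> real) \<Rightarrow> bool" where
  "Ckg k \<gamma> S g \<longleftrightarrow> Ck k S g \<and> (\<forall>is. length is = k \<longrightarrow> loc_holder \<gamma> S (pds is g))"

definition Ckg_vec :: "nat \<Rightarrow> real \<Rightarrow> (real^'d::finite) set \<Rightarrow> (real^'d \<Rightarrow> real^'n::finite) \<Rightarrow> bool" where
  "Ckg_vec k \<gamma> S v \<longleftrightarrow> (\<forall>i. Ckg k \<gamma> S (\<lambda>z. v z $ i))"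

definition Ckg_mat :: "nat \<Rightarrow> real \<Rightarrow> (real^'d::finite) set \<Rightarrow> (real^'d \<Rightarrow> real^'d^'d) \<Rightarrow> bool" where
  "Ckg_mat k \<gamma> S M \<longleftrightarrow> (\<forall>i j. Ckg k \<gamma> S (\<lambda>z. M z $ i $ j))"

definition spd :: "real^'d^'d \<Rightarrow> bool" where
  "spd M \<longleftrightarrow> transpose M = M \<and> (\<forall>v. v \<noteq> 0 \<longrightarrow> v \<bullet> (M *v v) > 0)"

definition grad :: "(real^'d::finite \<Rightarrow> real) \<Rightarrow> real^'d \<Rightarrow> real^'d" where
  "grad g z = (\<chi> i. pd i g z)"

definition divc :: "(real^'d::finite \<Rightarrow> real^'d^'d) \<Rightarrow> real^'d \<Rightarrow> real^'d" where
  "divc c z = (\<chi> i. \<Sum>j\<in>UNIV. pd j (\<lambda>w. c w $ i $ j) z)"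

definition vdiv :: "(real^'d::finite \<Rightarrow> real^'d) \<Rightarrow> real^'d \<Rightarrow> real" where
  "vdiv v z = (\<Sum>i\<in>UNIV. pd i (\<lambda>w. v w $ i) z)"

text \<open>The operator tilde L^Z (formal adjoint of L^Z), as written in (A3).\<close>
definition LZadj :: "(real^'d::finite \<Rightarrow> real^'d) \<Rightarrow> (real^'d \<Rightarrow> real^'d^'d)
     \<Rightarrow> (real^'d \<Rightarrow> real) \<Rightarrow> real^'d \<Rightarrow> real" where
  "LZadj m c g z =
     (1/2) * (\<Sum>i\<in>UNIV. \<Sum>j\<in>UNIV. c z $ i $ j * pd i (pd j g) z)
     - (\<Sum>i\<in>UNIV. (m z $ i - (\<Sum>j\<in>UNIV. pd j (\<lambda>w. c w $ i $ j) z)) * pd i g z)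
     - ((\<Sum>i\<in>UNIV. pd i (\<lambda>w. m w $ i) z)
        - (1/2) * (\<Sum>i\<in>UNIV. \<Sum>j\<in>UNIV. pd i (pd j (\<lambda>w. c w $ i $ j)) z)) * g z"

section \<open>Functions on F = E x (0,inf): variables (z,x); index None = x, Some i = z_i\<close>

definition pdo :: "'d::finite option \<Rightarrow> (real^'d \<Rightarrow> real \<Rightarrow> real) \<Rightarrow> real^'d \<Rightarrow> real \<Rightarrow> real" where
  "pdo a u z x = (case a of
      None \<Rightarrow> deriv (\<lambda>t. u z t) x
    | Some i \<Rightarrow> deriv (\<lambda>t. u (z + t *\<^sub>R axis i 1) x) 0)"

fun CkF :: "nat \<Rightarrow> ((real^'d::finite) \<times> real) set \<Rightarrow> (real^'d \<Rightarrow> real \<Rightarrow> real) \<Rightarrow> bool" where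
  "CkF 0 S u \<longleftrightarrow> continuous_on S (case_prod u)"
| "CkF (Suc k) S u \<longleftrightarrow> (case_prod u) differentiable_on S \<and> (\<forall>a. CkF k S (pdo a u))"

definition genOp :: "('d::finite option \<Rightarrow> 'd option \<Rightarrow> real^'d \<Rightarrow> real \<Rightarrow> real)
    \<Rightarrow> ('d option \<Rightarrow> real^'d \<Rightarrow> real \<Rightarrow> real)
    \<Rightarrow> (real^'d \<Rightarrow> real \<Rightarrow> real) \<Rightarrow> real^'d \<Rightarrow> real \<Rightarrow> real" where
  "genOp A b u z x =
     (1/2) * (\<Sum>a\<in>UNIV. \<Sum>a'\<in>UNIV. A a a' z x * pdo a (pdo a' u) z x)
     + (\<Sum>a\<in>UNIV. b a z x * pdo a u z x)"

definition adjOp :: "('d::finite option \<Rightarrow> 'd option \<Rightarrow> real^'d \<Rightarrow> real \<Rightarrow> real)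
    \<Rightarrow> ('d option \<Rightarrow> real^'d \<Rightarrow> real \<Rightarrow> real)
    \<Rightarrow> (real^'d \<Rightarrow> real \<Rightarrow> real) \<Rightarrow> real^'d \<Rightarrow> real \<Rightarrow> real" where
  "adjOp A b u z x =
     (1/2) * (\<Sum>a\<in>UNIV. \<Sum>a'\<in>UNIV. pdo a (pdo a' (\<lambda>w y. A a a' w y * u w y)) z x)
     - (\<Sum>a\<in>UNIV. pdo a (\<lambda>w y. b a w y * u w y) z x)"

definition Amat :: "(real^'d::finite \<Rightarrow> real^'d^'d) \<Rightarrow> (real^'d \<Rightarrow> real^'d) \<Rightarrow> (real^'d \<Rightarrow> real^'k::finite)
    \<Rightarrow> 'd option \<Rightarrow> 'd option \<Rightarrow> real^'d \<Rightarrow> real \<Rightarrow> real" where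
  "Amat c \<theta> \<eta> a a' z x = (case (a, a') of
      (Some i, Some j) \<Rightarrow> c z $ i $ j
    | (Some i, None) \<Rightarrow> x * (c z *v \<theta> z) $ i
    | (None, Some j) \<Rightarrow> x * (\<theta> z v* c z) $ j
    | (None, None) \<Rightarrow> x\<^sup>2 * (\<theta> z \<bullet> (c z *v \<theta> z) + \<eta> z \<bullet> \<eta> z))"

definition bL :: "(real^'d::finite \<Rightarrow> real^'d) \<Rightarrow> (real^'d \<Rightarrow> real^'d^'d) \<Rightarrow> (real^'d \<Rightarrow> real)
    \<Rightarrow> (real^'d \<Rightarrow> real^'d) \<Rightarrow> (real^'d \<Rightarrow> real^'k::finite) \<Rightarrow> (real^'d \<Rightarrow> real)
    \<Rightarrow> 'd option \<Rightarrow> real^'d \<Rightarrow> real \<Rightarrow> real" where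
  "bL m c a \<theta> \<eta> f idx z x = (case idx of
      Some i \<Rightarrow> m z $ i
    | None \<Rightarrow> - f z + x * (a z + \<theta> z \<bullet> (c z *v \<theta> z) + \<eta> z \<bullet> \<eta> z))"

definition bR :: "(real^'d::finite \<Rightarrow> real^'d) \<Rightarrow> (real^'d \<Rightarrow> real^'d^'d) \<Rightarrow> (real^'d \<Rightarrow> real)
    \<Rightarrow> (real^'d \<Rightarrow> real^'d) \<Rightarrow> (real^'d \<Rightarrow> real) \<Rightarrow> (real^'d \<Rightarrow> real)
    \<Rightarrow> 'd option \<Rightarrow> real^'d \<Rightarrow> real \<Rightarrow> real" where
  "bR m c a \<theta> f p idx z x = (case idx of
      Some i \<Rightarrow> ((c z *v grad p z) /\<^sub>R p z + divc c z - m z) $ i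
    | None \<Rightarrow> f z - x * (a z - \<theta> z \<bullet> ((c z *v grad p z) /\<^sub>R p z)
                         - vdiv (\<lambda>w. c w *v \<theta> w) z))"

end

theory Submission
  imports Defs
begin


lemma mvt0:
  fixes f f' :: "real \<Rightarrow> real"
  assumes "\<And>\<xi>. \<bar>\<xi>\<bar> \<le> \<bar>b\<bar> \<Longrightarrow> (f has_real_derivative f' \<xi>) (at \<xi>)"
  shows "\<exists>\<xi>. \<bar>\<xi>\<bar> \<le> \<bar>b\<bar> \<and> f b - f 0 = b * f' \<xi>"
proof (cases "b > 0")
  case True
  from MVT2[OF True, of f f'] assms obtain \<xi> where "0 < \<xi>" "\<xi> < b" "f b - f 0 = (b - 0) * f' \<xi>"
    by auto
  thus ?thesis by (intro exI[of _ \<xi>]) auto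
next
  case False
  show ?thesis
  proof (cases "b = 0")
    case True thus ?thesis by (intro exI[of _ 0]) auto
  next
    case False2: False
    with False have "b < 0" by auto
    from MVT2[OF this, of f f'] assms obtain \<xi> where "b < \<xi>" "\<xi> < 0" "f 0 - f b = (0 - b) * f' \<xi>"
      by auto
    thus ?thesis using \<open>b<0\<close> by (intro exI[of _ \<xi>]) (auto simp: algebra_simps)
  qed
qed

lemma peano2:
  fixes G Gs Gt Gst :: "real \<Rightarrow> real \<Rightarrow> real"
  assumes r: "r > 0"
    and ds: "\<And>s t. \<bar>s\<bar> < r \<Longrightarrow> \<bar>t\<bar> < r \<Longrightarrow> ((\<lambda>s'. G s' t) has_real_derivative Gs s t) (at s)"
    and dt: "\<And>s t. \<bar>s\<bar> < r \<Longrightarrow> \<bar>t\<bar> < r \<Longrightarrow> ((\<lambda>t'. G s t') has_real_derivative Gt s t) (at t)"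
    and dst: "\<And>s t. \<bar>s\<bar> < r \<Longrightarrow> \<bar>t\<bar> < r \<Longrightarrow> ((\<lambda>s'. Gt s' t) has_real_derivative Gst s t) (at s)"
    and cont: "\<And>e. e > 0 \<Longrightarrow> \<exists>d>0. \<forall>s t. \<bar>s\<bar> < d \<longrightarrow> \<bar>t\<bar> < d \<longrightarrow> \<bar>Gst s t - Gst 0 0\<bar> \<le> e"
  shows "((\<lambda>t. Gs 0 t) has_real_derivative Gst 0 0) (at 0)"
proof -
  let ?D = "Gst 0 0"
  have main: "\<forall>e>0. \<exists>d>0. \<forall>t. t \<noteq> 0 \<and> \<bar>t\<bar> < d \<longrightarrow> \<bar>(Gs 0 t - Gs 0 0) / t - ?D\<bar> \<le> e"
  proof (intro allI impI)
    fix e :: real assume e: "e > 0"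
    obtain d0 where d0: "d0 > 0" "\<forall>s t. \<bar>s\<bar> < d0 \<longrightarrow> \<bar>t\<bar> < d0 \<longrightarrow> \<bar>Gst s t - ?D\<bar> \<le> e"
      using cont[OF e] by auto
    define d where "d = min d0 r"
    have d: "d > 0" "d \<le> d0" "d \<le> r" using d0 r by (auto simp: d_def)
    have "\<bar>(Gs 0 t - Gs 0 0) / t - ?D\<bar> \<le> e" if t: "t \<noteq> 0" "\<bar>t\<bar> < d" for t
    proof -
      define q where "q s = (G s t - G 0 t - G s 0 + G 0 0) / (s * t)" for s
      have qb: "\<bar>q s - ?D\<bar> \<le> e" if s: "s \<noteq> 0" "\<bar>s\<bar> < d" for s
      proof -
        have "\<exists>\<tau>. \<bar>\<tau>\<bar> \<le> \<bar>t\<bar> \<and> (G s t - G 0 t) - (G s 0 - G 0 0) = t * (Gt s \<tau> - Gt 0 \<tau>)"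
          using mvt0[of t "\<lambda>\<tau>. G s \<tau> - G 0 \<tau>" "\<lambda>\<tau>. Gt s \<tau> - Gt 0 \<tau>"]
          using s t d by (simp add: DERIV_diff dt)
        then obtain \<tau> where tau: "\<bar>\<tau>\<bar> \<le> \<bar>t\<bar>" "(G s t - G 0 t) - (G s 0 - G 0 0) = t * (Gt s \<tau> - Gt 0 \<tau>)"
          by blast
        have "\<exists>\<sigma>. \<bar>\<sigma>\<bar> \<le> \<bar>s\<bar> \<and> Gt s \<tau> - Gt 0 \<tau> = s * Gst \<sigma> \<tau>"
          using mvt0[of s "\<lambda>\<sigma>. Gt \<sigma> \<tau>" "\<lambda>\<sigma>. Gst \<sigma> \<tau>"]
          using s t d tau by (simp add: dst)
        then obtain \<sigma> where sig: "\<bar>\<sigma>\<bar> \<le> \<bar>s\<bar>" "Gt s \<tau> - Gt 0 \<tau> = s * Gst \<sigma> \<tau>" by blast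
        have "q s = Gst \<sigma> \<tau>"
          using tau sig s t unfolding q_def by (simp add: field_simps)
        moreover have "\<bar>Gst \<sigma> \<tau> - ?D\<bar> \<le> e"
          using d0(2) sig tau s t d by auto
        ultimately show ?thesis by simp
      qed
      have lim1: "((\<lambda>s. (G s t - G 0 t) / s) \<longlongrightarrow> Gs 0 t) (at 0)"
        using ds[of 0 t] t d by (simp add: DERIV_def)
      have lim2: "((\<lambda>s. (G s 0 - G 0 0) / s) \<longlongrightarrow> Gs 0 0) (at 0)"
        using ds[of 0 0] r by (simp add: DERIV_def)
      have limq: "((\<lambda>s. \<bar>((G s t - G 0 t) / s - (G s 0 - G 0 0) / s) / t - ?D\<bar>) \<longlongrightarrow>
                   \<bar>(Gs 0 t - Gs 0 0) / t - ?D\<bar>) (at 0)"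
        using t by (intro tendsto_intros lim1 lim2) auto
      have ev: "eventually (\<lambda>s. \<bar>((G s t - G 0 t) / s - (G s 0 - G 0 0) / s) / t - ?D\<bar> \<le> e) (at 0)"
        unfolding eventually_at
      proof (intro exI[of _ d] conjI ballI impI allI)
        show "d > 0" by fact
        fix s :: real assume "s \<noteq> 0 \<and> dist s 0 < d"
        hence s: "s \<noteq> 0" "\<bar>s\<bar> < d" by auto
        have "((G s t - G 0 t) / s - (G s 0 - G 0 0) / s) / t = q s"
          unfolding q_def using s t by (simp add: field_simps)
        thus "\<bar>((G s t - G 0 t) / s - (G s 0 - G 0 0) / s) / t - ?D\<bar> \<le> e" using qb[OF s] by simp
      qed
      show ?thesis
        by (rule tendsto_upperbound[OF limq ev]) simp
    qed
    thus "\<exists>d>0. \<forall>t. t \<noteq> 0 \<and> \<bar>t\<bar> < d \<longrightarrow> \<bar>(Gs 0 t - Gs 0 0) / t - ?D\<bar> \<le> e"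
      using d by blast
  qed
  show ?thesis
    unfolding DERIV_def
  proof (rule tendstoI)
    fix e :: real assume e: "e > 0"
    obtain d where d: "d > 0" "\<forall>t. t \<noteq> 0 \<and> \<bar>t\<bar> < d \<longrightarrow> \<bar>(Gs 0 t - Gs 0 0) / t - ?D\<bar> \<le> e/2"
      using main e by (meson half_gt_zero)
    show "eventually (\<lambda>t. dist ((Gs 0 (0 + t) - Gs 0 0) / t) ?D < e) (at 0)"
      unfolding eventually_at
      using d e by (intro exI[of _ d]) (auto simp: dist_real_def)
  qed
qed



definition lineF :: "'d::finite option \<Rightarrow> (real^'d \<Rightarrow> real \<Rightarrow> real) \<Rightarrow> real^'d \<Rightarrow> real \<Rightarrow> real \<Rightarrow> real" where
  "lineF a u w y t = (case a of None \<Rightarrow> u w (y + t) | Some i \<Rightarrow> u (w + t *\<^sub>R axis i 1) y)"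

definition lineP :: "'d::finite option \<Rightarrow> real^'d \<Rightarrow> real \<Rightarrow> real \<Rightarrow> ((real^'d) \<times> real)" where
  "lineP a w y t = (case a of None \<Rightarrow> (w, y + t) | Some i \<Rightarrow> (w + t *\<^sub>R axis i 1, y))"

definition pdiff :: "'d::finite option \<Rightarrow> (real^'d \<Rightarrow> real \<Rightarrow> real) \<Rightarrow> real^'d \<Rightarrow> real \<Rightarrow> bool" where
  "pdiff a u w y \<longleftrightarrow> lineF a u w y differentiable (at 0)"

lemma lineF_P: "lineF a u w y = case_prod u \<circ> lineP a w y"
  by (rule ext) (auto simp: lineF_def lineP_def split: option.split)

lemma lineP_0[simp]: "lineP a w y 0 = (w, y)"
  by (auto simp: lineP_def split: option.split)

lemma lineF_0[simp]: "lineF a u w y 0 = u w y"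
  by (auto simp: lineF_def split: option.split)

lemma lineP_diff: "lineP a w y differentiable (at t)"
proof (cases a)
  case None
  have "((\<lambda>t. (w, y + t)) has_derivative (\<lambda>h. (0, h))) (at t)"
    by (auto intro!: derivative_eq_intros)
  thus ?thesis using None unfolding lineP_def by (auto intro: differentiableI)
next
  case (Some i)
  have "((\<lambda>t. (w + t *\<^sub>R axis i 1, y)) has_derivative (\<lambda>h. (h *\<^sub>R axis i 1, 0))) (at t)"
    by (auto intro!: derivative_eq_intros)
  thus ?thesis using Some unfolding lineP_def by (auto intro: differentiableI)
qed

lemma lineP_cont: "isCont (lineP a w y) t"
  using lineP_diff differentiable_imp_continuous_within by blast

lemma pdo_line: "pdo a u w y = deriv (lineF a u w y) 0"
proof (cases a)
  case None
  then show ?thesis unfolding pdo_def lineF_def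
    by (simp add: deriv_shift_0[of "\<lambda>t. u w t" y] o_def)
next
  case (Some i)
  then show ?thesis unfolding pdo_def lineF_def by simp
qed

lemma pdiff_D: "pdiff a u w y \<Longrightarrow> (lineF a u w y has_real_derivative pdo a u w y) (at 0)"
  unfolding pdiff_def pdo_line by (simp add: DERIV_deriv_iff_real_differentiable)

lemma pdiff_I: "(lineF a u w y has_real_derivative D) (at 0) \<Longrightarrow> pdiff a u w y \<and> pdo a u w y = D"
  unfolding pdiff_def pdo_line using DERIV_imp_deriv real_differentiable_def by blast

lemma lineF_mult: "lineF a (\<lambda>w y. u w y * v w y) w y = (\<lambda>t. lineF a u w y t * lineF a v w y t)"
  by (rule ext) (auto simp: lineF_def split: option.split)
lemma lineF_add: "lineF a (\<lambda>w y. u w y + v w y) w y = (\<lambda>t. lineF a u w y t + lineF a v w y t)"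
  by (rule ext) (auto simp: lineF_def split: option.split)
lemma lineF_diff: "lineF a (\<lambda>w y. u w y - v w y) w y = (\<lambda>t. lineF a u w y t - lineF a v w y t)"
  by (rule ext) (auto simp: lineF_def split: option.split)
lemma lineF_sum: "lineF a (\<lambda>w y. \<Sum>k\<in>S. u k w y) w y = (\<lambda>t. \<Sum>k\<in>S. lineF a (u k) w y t)"
  by (rule ext) (auto simp: lineF_def split: option.split)
lemma lineF_const: "lineF a (\<lambda>w y. k) w y = (\<lambda>t. k)"
  by (rule ext) (auto simp: lineF_def split: option.split)

lemma pdiff_mult_aux: assumes "pdiff a u w y" "pdiff a v w y"
  shows "pdiff a (\<lambda>w y. u w y * v w y) w y \<and> pdo a (\<lambda>w y. u w y * v w y) w y = pdo a u w y * v w y + u w y * pdo a v w y"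
proof -
  have "(lineF a (\<lambda>w y. u w y * v w y) w y has_real_derivative pdo a u w y * v w y + u w y * pdo a v w y) (at 0)"
    unfolding lineF_mult using DERIV_mult[OF pdiff_D[OF assms(1)] pdiff_D[OF assms(2)]] by (simp add: algebra_simps)
  thus ?thesis by (rule pdiff_I)
qed
lemma pdiff_add_aux: assumes "pdiff a u w y" "pdiff a v w y"
  shows "pdiff a (\<lambda>w y. u w y + v w y) w y \<and> pdo a (\<lambda>w y. u w y + v w y) w y = pdo a u w y + pdo a v w y"
proof -
  have "(lineF a (\<lambda>w y. u w y + v w y) w y has_real_derivative pdo a u w y + pdo a v w y) (at 0)"
    unfolding lineF_add using DERIV_add[OF pdiff_D[OF assms(1)] pdiff_D[OF assms(2)]] by (simp add: algebra_simps)
  thus ?thesis by (rule pdiff_I)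
qed
lemma pdiff_diff_aux: assumes "pdiff a u w y" "pdiff a v w y"
  shows "pdiff a (\<lambda>w y. u w y - v w y) w y \<and> pdo a (\<lambda>w y. u w y - v w y) w y = pdo a u w y - pdo a v w y"
proof -
  have "(lineF a (\<lambda>w y. u w y - v w y) w y has_real_derivative pdo a u w y - pdo a v w y) (at 0)"
    unfolding lineF_diff using DERIV_diff[OF pdiff_D[OF assms(1)] pdiff_D[OF assms(2)]] by (simp add: algebra_simps)
  thus ?thesis by (rule pdiff_I)
qed
lemma pdiff_const_aux: "pdiff a (\<lambda>w y. k) w y \<and> pdo a (\<lambda>w y. k) w y = 0"
proof -
  have "(lineF a (\<lambda>w y. k) w y has_real_derivative 0) (at 0)"
    unfolding lineF_const by simp
  thus ?thesis by (rule pdiff_I)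
qed
lemma pdiff_mult[simp]: "pdiff a u w y \<Longrightarrow> pdiff a v w y \<Longrightarrow> pdiff a (\<lambda>w y. u w y * v w y) w y"
  using pdiff_mult_aux by blast
lemma pdo_mult[simp]: "pdiff a u w y \<Longrightarrow> pdiff a v w y \<Longrightarrow>
   pdo a (\<lambda>w y. u w y * v w y) w y = pdo a u w y * v w y + u w y * pdo a v w y"
  using pdiff_mult_aux by blast
lemma pdiff_add[simp]: "pdiff a u w y \<Longrightarrow> pdiff a v w y \<Longrightarrow> pdiff a (\<lambda>w y. u w y + v w y) w y"
  using pdiff_add_aux by blast
lemma pdo_add[simp]: "pdiff a u w y \<Longrightarrow> pdiff a v w y \<Longrightarrow>
   pdo a (\<lambda>w y. u w y + v w y) w y = pdo a u w y + pdo a v w y"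
  using pdiff_add_aux by blast
lemma pdiff_diff[simp]: "pdiff a u w y \<Longrightarrow> pdiff a v w y \<Longrightarrow> pdiff a (\<lambda>w y. u w y - v w y) w y"
  using pdiff_diff_aux by blast
lemma pdo_diff[simp]: "pdiff a u w y \<Longrightarrow> pdiff a v w y \<Longrightarrow>
   pdo a (\<lambda>w y. u w y - v w y) w y = pdo a u w y - pdo a v w y"
  using pdiff_diff_aux by blast
lemma pdiff_const[simp]: "pdiff a (\<lambda>w y. k) w y"
  using pdiff_const_aux by blast
lemma pdo_const[simp]: "pdo a (\<lambda>w y. k) w y = 0"
  using pdiff_const_aux by blast

lemma pdiff_sum_aux: "(\<And>k. k \<in> S \<Longrightarrow> pdiff a (u k) w y) \<Longrightarrow>
   pdiff a (\<lambda>w y. \<Sum>k\<in>S. u k w y) w y \<and> pdo a (\<lambda>w y. \<Sum>k\<in>S. u k w y) w y = (\<Sum>k\<in>S. pdo a (u k) w y)"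
  apply (rule pdiff_I)
  unfolding lineF_sum
  by (rule DERIV_sum) (simp add: pdiff_D)
lemma pdiff_sum[simp]: "(\<And>k. k \<in> S \<Longrightarrow> pdiff a (u k) w y) \<Longrightarrow> pdiff a (\<lambda>w y. \<Sum>k\<in>S. u k w y) w y"
  using pdiff_sum_aux by blast
lemma pdo_sum[simp]: "(\<And>k. k \<in> S \<Longrightarrow> pdiff a (u k) w y) \<Longrightarrow>
   pdo a (\<lambda>w y. \<Sum>k\<in>S. u k w y) w y = (\<Sum>k\<in>S. pdo a (u k) w y)"
  using pdiff_sum_aux by blast

lemma pdo_Some_z[simp]: "pdo (Some i) (\<lambda>w y. g w) = (\<lambda>w y. pd i g w)"
  by (intro ext) (simp add: pdo_def pd_def)
lemma pdo_None_z[simp]: "pdo None (\<lambda>w y. g w) = (\<lambda>w y. 0)"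
  by (intro ext) (simp add: pdo_def)
lemma pdiff_None_z[simp]: "pdiff None (\<lambda>w y. g w) w y"
  unfolding pdiff_def lineF_def by simp
lemma pdiff_Some_z: "g differentiable (at w) \<Longrightarrow> pdiff (Some i) (\<lambda>w y. g w) w y"
  unfolding pdiff_def lineF_def
  using differentiable_chain_at[of "\<lambda>t. w + t *\<^sub>R axis i 1" 0 g]
  by (simp add: o_def)

lemma pdo_Some_y[simp]: "pdo (Some i) (\<lambda>w y. y) = (\<lambda>w y. 0)"
  by (intro ext) (simp add: pdo_def)
lemma pdo_None_y[simp]: "pdo None (\<lambda>w y. y) = (\<lambda>w y. 1)"
  by (intro ext) (simp add: pdo_def)
lemma pdiff_y[simp]: "pdiff a (\<lambda>w y. y) w y"
  unfolding pdiff_def lineF_def real_differentiable_def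
  by (cases a) (auto intro!: derivative_eq_intros exI)

lemma pdiff_frechet: "(case_prod u) differentiable (at (w, y)) \<Longrightarrow> pdiff a u w y"
  unfolding pdiff_def lineF_P
  by (rule differentiable_chain_at[OF lineP_diff]) simp

lemma lineF_ev:
  assumes F: "open F" "(w, y) \<in> F" and eq: "\<And>w' y'. (w', y') \<in> F \<Longrightarrow> X w' y' = Y w' y'"
  shows "eventually (\<lambda>t. lineF a X w y t = lineF a Y w y t) (nhds 0)"
proof -
  have "eventually (\<lambda>t. lineP a w y t \<in> F) (at 0)"
    using lineP_cont[where a=a and w=w and y=y and t=0] F unfolding isCont_def
    by (intro topological_tendstoD) auto
  hence "eventually (\<lambda>t. lineP a w y t \<in> F) (nhds 0)"
    using F by (simp add: eventually_nhds_conv_at)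
  thus ?thesis
    by eventually_elim (auto simp: lineF_P eq split: prod.splits)
qed

lemma pdo_cong:
  assumes "open F" "(w, y) \<in> F" "\<And>w' y'. (w', y') \<in> F \<Longrightarrow> X w' y' = Y w' y'"
  shows "pdo a X w y = pdo a Y w y"
proof -
  have "\<And>D. (lineF a X w y has_real_derivative D) (at 0) \<longleftrightarrow> (lineF a Y w y has_real_derivative D) (at 0)"
    using lineF_ev[OF assms] by (intro DERIV_cong_ev) auto
  thus ?thesis unfolding pdo_line deriv_def by simp
qed

lemma pdiff_cong:
  assumes "open F" "(w, y) \<in> F" "\<And>w' y'. (w', y') \<in> F \<Longrightarrow> X w' y' = Y w' y'"
  shows "pdiff a X w y \<longleftrightarrow> pdiff a Y w y"
proof -
  have "\<And>D. (lineF a X w y has_real_derivative D) (at 0) \<longleftrightarrow> (lineF a Y w y has_real_derivative D) (at 0)"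
    using lineF_ev[OF assms] by (intro DERIV_cong_ev) auto
  thus ?thesis unfolding pdiff_def real_differentiable_def by simp
qed



definition C1F :: "((real^'d::finite) \<times> real) set \<Rightarrow> (real^'d \<Rightarrow> real \<Rightarrow> real) \<Rightarrow> bool" where
  "C1F F u \<longleftrightarrow> (\<forall>w y a. (w, y) \<in> F \<longrightarrow> pdiff a u w y)"

definition C2F :: "((real^'d::finite) \<times> real) set \<Rightarrow> (real^'d \<Rightarrow> real \<Rightarrow> real) \<Rightarrow> bool" where
  "C2F F u \<longleftrightarrow> C1F F u \<and> (\<forall>a. C1F F (pdo a u))"

lemma C1F_D: "C1F F u \<Longrightarrow> (w, y) \<in> F \<Longrightarrow> pdiff a u w y"
  unfolding C1F_def by blast
lemma C2F_D1: "C2F F u \<Longrightarrow> (w, y) \<in> F \<Longrightarrow> pdiff a u w y"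
  unfolding C2F_def C1F_def by blast
lemma C2F_D2: "C2F F u \<Longrightarrow> (w, y) \<in> F \<Longrightarrow> pdiff a (pdo b u) w y"
  unfolding C2F_def C1F_def by blast

lemma C1F_mult[simp]: "C1F F u \<Longrightarrow> C1F F v \<Longrightarrow> C1F F (\<lambda>w y. u w y * v w y)"
  unfolding C1F_def by simp
lemma C1F_add[simp]: "C1F F u \<Longrightarrow> C1F F v \<Longrightarrow> C1F F (\<lambda>w y. u w y + v w y)"
  unfolding C1F_def by simp
lemma C1F_diff[simp]: "C1F F u \<Longrightarrow> C1F F v \<Longrightarrow> C1F F (\<lambda>w y. u w y - v w y)"
  unfolding C1F_def by simp
lemma C1F_const[simp]: "C1F F (\<lambda>w y. k)"
  unfolding C1F_def by simp
lemma C1F_sum[simp]: "(\<And>k. k \<in> S \<Longrightarrow> C1F F (u k)) \<Longrightarrow> C1F F (\<lambda>w y. \<Sum>k\<in>S. u k w y)"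
  unfolding C1F_def by simp
lemma C1F_y[simp]: "C1F F (\<lambda>w y. y)"
  unfolding C1F_def by simp

lemma C1F_cong: "open F \<Longrightarrow> (\<And>w y. (w, y) \<in> F \<Longrightarrow> X w y = Y w y) \<Longrightarrow> C1F F Y \<Longrightarrow> C1F F X"
  unfolding C1F_def
proof (intro allI impI)
  fix w y a assume o: "open F" and eq: "\<And>w y. (w, y) \<in> F \<Longrightarrow> X w y = Y w y"
    and c: "\<forall>w y a. (w, y) \<in> F \<longrightarrow> pdiff a Y w y" and wy: "(w, y) \<in> F"
  show "pdiff a X w y" using pdiff_cong[where F=F and w=w and y=y and X=X and Y=Y and a=a, OF o wy eq] c wy by blast
qed

lemma C2F_mult[simp]:
  assumes F: "open F" and u: "C2F F u" and v: "C2F F v"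
  shows "C2F F (\<lambda>w y. u w y * v w y)"
  unfolding C2F_def
proof (intro conjI allI)
  show "C1F F (\<lambda>w y. u w y * v w y)" using u v unfolding C2F_def by simp
  fix a
  show "C1F F (pdo a (\<lambda>w y. u w y * v w y))"
  proof (rule C1F_cong[OF F])
    show "pdo a (\<lambda>w y. u w y * v w y) w y = pdo a u w y * v w y + u w y * pdo a v w y"
      if "(w, y) \<in> F" for w y using that by (simp add: C2F_D1[OF u that] C2F_D1[OF v that])
    show "C1F F (\<lambda>w y. pdo a u w y * v w y + u w y * pdo a v w y)"
      using u v unfolding C2F_def by simp
  qed
qed

lemma C2F_add[simp]:
  assumes F: "open F" and u: "C2F F u" and v: "C2F F v"
  shows "C2F F (\<lambda>w y. u w y + v w y)"
  unfolding C2F_def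
proof (intro conjI allI)
  show "C1F F (\<lambda>w y. u w y + v w y)" using u v unfolding C2F_def by simp
  fix a
  show "C1F F (pdo a (\<lambda>w y. u w y + v w y))"
  proof (rule C1F_cong[OF F])
    show "pdo a (\<lambda>w y. u w y + v w y) w y = pdo a u w y + pdo a v w y"
      if "(w, y) \<in> F" for w y using that by (simp add: C2F_D1[OF u that] C2F_D1[OF v that])
    show "C1F F (\<lambda>w y. pdo a u w y + pdo a v w y)"
      using u v unfolding C2F_def by simp
  qed
qed

lemma C2F_diff[simp]:
  assumes F: "open F" and u: "C2F F u" and v: "C2F F v"
  shows "C2F F (\<lambda>w y. u w y - v w y)"
  unfolding C2F_def
proof (intro conjI allI)
  show "C1F F (\<lambda>w y. u w y - v w y)" using u v unfolding C2F_def by simp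
  fix a
  show "C1F F (pdo a (\<lambda>w y. u w y - v w y))"
  proof (rule C1F_cong[OF F])
    show "pdo a (\<lambda>w y. u w y - v w y) w y = pdo a u w y - pdo a v w y"
      if "(w, y) \<in> F" for w y using that by (simp add: C2F_D1[OF u that] C2F_D1[OF v that])
    show "C1F F (\<lambda>w y. pdo a u w y - pdo a v w y)"
      using u v unfolding C2F_def by simp
  qed
qed

lemma C2F_sum[simp]:
  assumes F: "open F" and u: "\<And>k. k \<in> S \<Longrightarrow> C2F F (u k)"
  shows "C2F F (\<lambda>w y. \<Sum>k\<in>S. u k w y)"
  unfolding C2F_def
proof (intro conjI allI)
  show "C1F F (\<lambda>w y. \<Sum>k\<in>S. u k w y)" using u unfolding C2F_def by simp
  fix a
  show "C1F F (pdo a (\<lambda>w y. \<Sum>k\<in>S. u k w y))"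
  proof (rule C1F_cong[OF F])
    show "pdo a (\<lambda>w y. \<Sum>k\<in>S. u k w y) w y = (\<Sum>k\<in>S. pdo a (u k) w y)"
      if "(w, y) \<in> F" for w y using that u by (intro pdo_sum C2F_D1)
    show "C1F F (\<lambda>w y. \<Sum>k\<in>S. pdo a (u k) w y)"
      using u unfolding C2F_def by simp
  qed
qed

lemma C2F_const[simp]: "C2F F (\<lambda>w y. k)"
  unfolding C2F_def C1F_def
  by (simp add: pdiff_const_aux[THEN conjunct2, abs_def] del: pdo_const)
lemma C2F_y[simp]: "C2F F (\<lambda>w y. y)"
  unfolding C2F_def
proof (intro conjI allI)
  show "C1F F (\<lambda>w y. y)" by simp
  fix a show "C1F F (pdo a (\<lambda>w y. y))" by (cases a) simp_all
qed

lemma pdo2_mult[simp]: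
  assumes F: "open F" "(z, x) \<in> F" and u: "C2F F u" and v: "C2F F v"
  shows "pdo b (pdo a (\<lambda>w y. u w y * v w y)) z x =
     pdo b (pdo a u) z x * v z x + pdo a u z x * pdo b v z x + pdo b u z x * pdo a v z x + u z x * pdo b (pdo a v) z x" (is "_ = ?R")
proof -
  have "pdo b (pdo a (\<lambda>w y. u w y * v w y)) z x = pdo b (\<lambda>w y. pdo a u w y * v w y + u w y * pdo a v w y) z x"
    using F by (intro pdo_cong[OF F(1)]) (simp_all add: C2F_D1[OF u] C2F_D1[OF v])
  also have "\<dots> = ?R"
    using F by (simp add: C2F_D1[OF u F(2)] C2F_D1[OF v F(2)] C2F_D2[OF u F(2)] C2F_D2[OF v F(2)] algebra_simps)
  finally show ?thesis .
qed

lemma pdo2_add[simp]: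
  assumes F: "open F" "(z, x) \<in> F" and u: "C2F F u" and v: "C2F F v"
  shows "pdo b (pdo a (\<lambda>w y. u w y + v w y)) z x = pdo b (pdo a u) z x + pdo b (pdo a v) z x" (is "_ = ?R")
proof -
  have "pdo b (pdo a (\<lambda>w y. u w y + v w y)) z x = pdo b (\<lambda>w y. pdo a u w y + pdo a v w y) z x"
    using F by (intro pdo_cong[OF F(1)]) (simp_all add: C2F_D1[OF u] C2F_D1[OF v])
  also have "\<dots> = ?R"
    using F by (simp add: C2F_D1[OF u F(2)] C2F_D1[OF v F(2)] C2F_D2[OF u F(2)] C2F_D2[OF v F(2)] algebra_simps)
  finally show ?thesis .
qed

lemma pdo2_diff[simp]:
  assumes F: "open F" "(z, x) \<in> F" and u: "C2F F u" and v: "C2F F v"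
  shows "pdo b (pdo a (\<lambda>w y. u w y - v w y)) z x = pdo b (pdo a u) z x - pdo b (pdo a v) z x" (is "_ = ?R")
proof -
  have "pdo b (pdo a (\<lambda>w y. u w y - v w y)) z x = pdo b (\<lambda>w y. pdo a u w y - pdo a v w y) z x"
    using F by (intro pdo_cong[OF F(1)]) (simp_all add: C2F_D1[OF u] C2F_D1[OF v])
  also have "\<dots> = ?R"
    using F by (simp add: C2F_D1[OF u F(2)] C2F_D1[OF v F(2)] C2F_D2[OF u F(2)] C2F_D2[OF v F(2)] algebra_simps)
  finally show ?thesis .
qed

lemma pdo2_sum[simp]:
  assumes F: "open F" "(z, x) \<in> F" and u: "\<And>k. k \<in> S \<Longrightarrow> C2F F (u k)"
  shows "pdo b (pdo a (\<lambda>w y. \<Sum>k\<in>S. u k w y)) z x = (\<Sum>k\<in>S. pdo b (pdo a (u k)) z x)" (is "_ = ?R")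
proof -
  have "pdo b (pdo a (\<lambda>w y. \<Sum>k\<in>S. u k w y)) z x = pdo b (\<lambda>w y. \<Sum>k\<in>S. pdo a (u k) w y) z x"
    using F u by (intro pdo_cong[OF F] pdo_sum C2F_D1)
  also have "\<dots> = ?R"
    using F u by (intro pdo_sum pdiff_sum C2F_D1 C2F_D2)
  finally show ?thesis .
qed

lemma C1F_z:
  assumes "\<And>w y. (w, y) \<in> F \<Longrightarrow> g differentiable (at w)"
  shows "C1F F (\<lambda>w y. g w)"
  unfolding C1F_def
proof (intro allI impI)
  fix w y a assume "(w, y) \<in> F"
  thus "pdiff a (\<lambda>w y. g w) w y" using assms
    by (cases a) (auto intro: pdiff_Some_z)
qed

lemma C2F_z:
  assumes "\<And>w y. (w, y) \<in> F \<Longrightarrow> g differentiable (at w)"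
     and "\<And>w y i. (w, y) \<in> F \<Longrightarrow> pd i g differentiable (at w)"
  shows "C2F F (\<lambda>w y. g w)"
  unfolding C2F_def
proof (intro conjI allI)
  show "C1F F (\<lambda>w y. g w)" using assms(1) by (rule C1F_z)
  fix a show "C1F F (pdo a (\<lambda>w y. g w))"
    using assms(2) by (cases a) (auto intro: C1F_z)
qed

lemma dist_line_pt:
  fixes z :: "real^'d::finite"
  shows "dist (z + s *\<^sub>R axis i 1, x + t) (z, x) \<le> \<bar>s\<bar> + \<bar>t\<bar>"
proof -
  have "dist (z + s *\<^sub>R axis i 1, x + t) (z, x) = sqrt ((dist (z + s *\<^sub>R axis i 1) z)\<^sup>2 + (dist (x+t) x)\<^sup>2)"
    by (rule dist_Pair_Pair)
  also have "\<dots> \<le> \<bar>dist (z + s *\<^sub>R axis i 1) z\<bar> + \<bar>dist (x+t) x\<bar>"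
    by (rule sqrt_sum_squares_le_sum_abs)
  also have "\<dots> = \<bar>s\<bar> + \<bar>t\<bar>"
    by (simp add: dist_norm)
  finally show ?thesis .
qed



lemma peano_pdo:
  fixes u :: "real^'d::finite \<Rightarrow> real \<Rightarrow> real"
  assumes F: "open F" "(z, x) \<in> F"
    and d1: "\<And>w y. (w, y) \<in> F \<Longrightarrow> pdiff (Some i) u w y"
    and d2: "\<And>w y. (w, y) \<in> F \<Longrightarrow> pdiff None u w y"
    and d3: "\<And>w y. (w, y) \<in> F \<Longrightarrow> pdiff (Some i) (pdo None u) w y"
    and cont: "continuous_on F (case_prod (pdo (Some i) (pdo None u)))"
  shows "pdiff None (pdo (Some i) u) z x \<and> pdo None (pdo (Some i) u) z x = pdo (Some i) (pdo None u) z x"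
proof -
  obtain \<epsilon> where eps: "\<epsilon> > 0" "ball (z, x) \<epsilon> \<subseteq> F"
    using F open_contains_ball by blast
  define r where "r = \<epsilon> / 2"
  have r: "r > 0" using eps by (simp add: r_def)
  have inF: "(z + s *\<^sub>R axis i 1, x + t) \<in> F" if "\<bar>s\<bar> < r" "\<bar>t\<bar> < r" for s t
  proof -
    have "dist (z + s *\<^sub>R axis i 1, x + t) (z, x) < \<epsilon>"
      using dist_line_pt[of z s i x t] that r_def by linarith
    thus ?thesis using eps by (auto simp: dist_commute)
  qed
  define G where "G s t = u (z + s *\<^sub>R axis i 1) (x + t)" for s t
  define Gs where "Gs s t = pdo (Some i) u (z + s *\<^sub>R axis i 1) (x + t)" for s t
  define Gt where "Gt s t = pdo None u (z + s *\<^sub>R axis i 1) (x + t)" for s t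
  define Gst where "Gst s t = pdo (Some i) (pdo None u) (z + s *\<^sub>R axis i 1) (x + t)" for s t
  have lineS: "lineF (Some i) v (z + s *\<^sub>R axis i 1) (x + t) = (\<lambda>\<tau>. v (z + (\<tau> + s) *\<^sub>R axis i 1) (x + t))" for v s t
    by (rule ext) (simp add: lineF_def scaleR_add_left add_ac)
  have lineN: "lineF None v (z + s *\<^sub>R axis i 1) (x + t) = (\<lambda>\<tau>. v (z + s *\<^sub>R axis i 1) (x + (\<tau> + t)))" for v s t
    by (rule ext) (simp add: lineF_def add_ac)
  have ds: "((\<lambda>s'. G s' t) has_real_derivative Gs s t) (at s)" if "\<bar>s\<bar> < r" "\<bar>t\<bar> < r" for s t
  proof -
    have "((\<lambda>\<tau>. u (z + (\<tau> + s) *\<^sub>R axis i 1) (x + t)) has_real_derivative Gs s t) (at 0)"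
      using pdiff_D[OF d1[OF inF[OF that]]] unfolding lineS Gs_def .
    thus ?thesis unfolding G_def using DERIV_shift[of "\<lambda>s'. u (z + s' *\<^sub>R axis i 1) (x + t)" _ 0 s] by simp
  qed
  have dt: "((\<lambda>t'. G s t') has_real_derivative Gt s t) (at t)" if "\<bar>s\<bar> < r" "\<bar>t\<bar> < r" for s t
  proof -
    have "((\<lambda>\<tau>. u (z + s *\<^sub>R axis i 1) (x + (\<tau> + t))) has_real_derivative Gt s t) (at 0)"
      using pdiff_D[OF d2[OF inF[OF that]]] unfolding lineN Gt_def .
    thus ?thesis unfolding G_def using DERIV_shift[of "\<lambda>t'. u (z + s *\<^sub>R axis i 1) (x + t')" _ 0 t] by simp
  qed
  have dst: "((\<lambda>s'. Gt s' t) has_real_derivative Gst s t) (at s)" if "\<bar>s\<bar> < r" "\<bar>t\<bar> < r" for s t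
  proof -
    have "((\<lambda>\<tau>. pdo None u (z + (\<tau> + s) *\<^sub>R axis i 1) (x + t)) has_real_derivative Gst s t) (at 0)"
      using pdiff_D[OF d3[OF inF[OF that]]] unfolding lineS Gst_def .
    thus ?thesis unfolding Gt_def using DERIV_shift[of "\<lambda>s'. pdo None u (z + s' *\<^sub>R axis i 1) (x + t)" _ 0 s] by simp
  qed
  have ct: "\<exists>d>0. \<forall>s t. \<bar>s\<bar> < d \<longrightarrow> \<bar>t\<bar> < d \<longrightarrow> \<bar>Gst s t - Gst 0 0\<bar> \<le> e" if e: "e > 0" for e
  proof -
    have "isCont (case_prod (pdo (Some i) (pdo None u))) (z, x)"
      using cont F continuous_on_eq_continuous_at by blast
    then obtain d where d: "d > 0" "\<And>p. dist p (z, x) < d \<Longrightarrow>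
        dist (case_prod (pdo (Some i) (pdo None u)) p) (case_prod (pdo (Some i) (pdo None u)) (z, x)) < e"
      unfolding continuous_at_eps_delta using e by blast
    show ?thesis
    proof (intro exI[of _ "d/2"] conjI allI impI)
      show "d / 2 > 0" using d by simp
      fix s t :: real assume st: "\<bar>s\<bar> < d/2" "\<bar>t\<bar> < d/2"
      have "dist (z + s *\<^sub>R axis i 1, x + t) (z, x) < d"
        using dist_line_pt[of z s i x t] st by linarith
      from d(2)[OF this] show "\<bar>Gst s t - Gst 0 0\<bar> \<le> e"
        unfolding Gst_def by (simp add: dist_real_def)
    qed
  qed
  have "((\<lambda>t. Gs 0 t) has_real_derivative Gst 0 0) (at 0)"
    by (rule peano2[OF r ds dt dst ct]) auto
  moreover have "(\<lambda>t. Gs 0 t) = lineF None (pdo (Some i) u) z x"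
    by (rule ext) (simp add: Gs_def lineF_def)
  ultimately show ?thesis using pdiff_I by (simp add: Gst_def)
qed



lemma alg_main:
  fixes C Cdd Pdd Hss Thd :: "'d::finite \<Rightarrow> 'd \<Rightarrow> real" and Cd :: "'d \<Rightarrow> 'd \<Rightarrow> 'd \<Rightarrow> real"
    and Pd Hs Hsx Hxs M Md Th :: "'d \<Rightarrow> real"
    and P H Hx Hxx X Q AA FF G :: real
  assumes Csym: "\<And>i j. C i j = C j i"
    and Cdsym: "\<And>k i j. Cd k i j = Cd k j i"
    and Hsym: "\<And>i. Hsx i = Hxs i"
    and LZ: "(1/2) * (\<Sum>i\<in>UNIV. \<Sum>j\<in>UNIV. C i j * Pdd i j)
             - (\<Sum>i\<in>UNIV. (M i - (\<Sum>j\<in>UNIV. Cd j i j)) * Pd i)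
             - ((\<Sum>i\<in>UNIV. Md i) - (1/2) * (\<Sum>i\<in>UNIV. \<Sum>j\<in>UNIV. Cdd i j)) * P = 0"
    and GP: "G * P = AA * P - (\<Sum>i\<in>UNIV. Th i * (\<Sum>j\<in>UNIV. C i j * Pd j))
               - P * (\<Sum>i\<in>UNIV. \<Sum>j\<in>UNIV. Cd i i j * Th j + C i j * Thd i j)"
  defines "V \<equiv> \<lambda>i. \<Sum>j\<in>UNIV. C i j * Th j"
    and "Vd \<equiv> \<lambda>k i. \<Sum>j\<in>UNIV. Cd k i j * Th j + C i j * Thd k j"
    and "W \<equiv> \<lambda>j. \<Sum>i\<in>UNIV. Th i * C i j"
    and "Wd \<equiv> \<lambda>k j. \<Sum>i\<in>UNIV. Thd k i * C i j + Th i * Cd k i j"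
  defines "TSS \<equiv> \<lambda>i j. Cdd i j * (P * H) + Cd j i j * (Pd i * H + P * Hs i) + Cd i i j * (Pd j * H + P * Hs j)
                 + C i j * (Pdd i j * H + Pd j * Hs i + Pd i * Hs j + P * Hss i j)"
    and "TSN \<equiv> \<lambda>i. Vd i i * (P * H) + V i * (Pd i * H + P * Hs i) + X * Vd i i * (P * Hx) + X * V i * (Pd i * Hx + P * Hsx i)"
    and "TNS \<equiv> \<lambda>j. Wd j j * (P * H) + X * Wd j j * (P * Hx) + W j * (Pd j * H + P * Hs j) + X * W j * (Pd j * Hx + P * Hxs j)"
    and "TNN \<equiv> 2 * Q * (P * H) + 2 * (2 * X * Q) * (P * Hx) + X * X * Q * (P * Hxx)"
    and "US \<equiv> \<lambda>i. ((\<Sum>j\<in>UNIV. Cd i i j * Pd j + C i j * Pdd i j) + (\<Sum>j\<in>UNIV. Cdd i j) * P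
                  + (\<Sum>j\<in>UNIV. Cd j i j) * Pd i - (Md i * P + M i * Pd i)) * H
               + ((\<Sum>j\<in>UNIV. C i j * Pd j) + (\<Sum>j\<in>UNIV. Cd j i j) * P - M i * P) * Hs i"
    and "UX \<equiv> - G * (P * H) + (FF - X * G) * (P * Hx)"
  shows "(1/2) * ((\<Sum>i\<in>UNIV. \<Sum>j\<in>UNIV. TSS i j) + (\<Sum>i\<in>UNIV. TSN i) + (\<Sum>j\<in>UNIV. TNS j) + TNN)
          - ((\<Sum>i\<in>UNIV. US i) + UX)
       = P * ((1/2) * ((\<Sum>i\<in>UNIV. \<Sum>j\<in>UNIV. C i j * Hss i j)
                 + (\<Sum>i\<in>UNIV. V i * Hs i + X * V i * Hxs i)
                 + (\<Sum>j\<in>UNIV. W j * Hs j + X * W j * Hxs j)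
                 + (2 * X * Q * Hx + X * X * Q * Hxx))
              + (\<Sum>i\<in>UNIV. M i * Hs i) + (AA + Q) * H + (- FF + X * (AA + Q)) * Hx)"
proof -
  define D where "D i = (\<Sum>j\<in>UNIV. Cd j i j)" for i
  define CP where "CP i = (\<Sum>j\<in>UNIV. C i j * Pd j)" for i
  have WV: "W j = V j" for j unfolding W_def V_def by (rule sum.cong) (auto simp: Csym mult.commute)
  have WdV: "Wd j j = Vd j j" for j unfolding Wd_def Vd_def
    by (rule sum.cong) (auto simp: Csym Cdsym[of j j] mult.commute)
  have T: "(\<Sum>i\<in>UNIV. Th i * CP i) = (\<Sum>i\<in>UNIV. V i * Pd i)"
    unfolding CP_def V_def sum_distrib_left sum_distrib_right
    by (subst sum.swap) (auto intro!: sum.cong simp: Csym mult_ac)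
  have swapD: "(\<Sum>i\<in>UNIV. \<Sum>j\<in>UNIV. Cd i i j * f j) = (\<Sum>i\<in>UNIV. D i * f i)" for f :: "'d \<Rightarrow> real"
    unfolding D_def sum_distrib_right
    by (subst sum.swap) (auto intro!: sum.cong simp: Cdsym)
  have swapC: "(\<Sum>i\<in>UNIV. \<Sum>j\<in>UNIV. C i j * Pd i * Hs j) = (\<Sum>i\<in>UNIV. CP i * Hs i)"
    unfolding CP_def sum_distrib_right
    by (subst sum.swap) (auto intro!: sum.cong simp: Csym mult_ac)
  have eqA: "(\<Sum>i\<in>UNIV. \<Sum>j\<in>UNIV. TSS i j) =
      (\<Sum>i\<in>UNIV. \<Sum>j\<in>UNIV. Cdd i j) * (P * H) + 2 * ((\<Sum>i\<in>UNIV. D i * Pd i) * H + P * (\<Sum>i\<in>UNIV. D i * Hs i))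
      + (\<Sum>i\<in>UNIV. \<Sum>j\<in>UNIV. C i j * Pdd i j) * H + 2 * (\<Sum>i\<in>UNIV. CP i * Hs i)
      + P * (\<Sum>i\<in>UNIV. \<Sum>j\<in>UNIV. C i j * Hss i j)"
  proof -
    have "(\<Sum>i\<in>UNIV. \<Sum>j\<in>UNIV. TSS i j) =
       (\<Sum>i\<in>UNIV. \<Sum>j\<in>UNIV. Cdd i j) * (P * H)
       + (\<Sum>i\<in>UNIV. \<Sum>j\<in>UNIV. Cd j i j * (Pd i * H + P * Hs i))
       + (\<Sum>i\<in>UNIV. \<Sum>j\<in>UNIV. Cd i i j * (Pd j * H + P * Hs j))
       + (\<Sum>i\<in>UNIV. \<Sum>j\<in>UNIV. C i j * Pdd i j) * H
       + (\<Sum>i\<in>UNIV. \<Sum>j\<in>UNIV. C i j * Pd j * Hs i)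
       + (\<Sum>i\<in>UNIV. \<Sum>j\<in>UNIV. C i j * Pd i * Hs j)
       + P * (\<Sum>i\<in>UNIV. \<Sum>j\<in>UNIV. C i j * Hss i j)"
      unfolding TSS_def by (simp add: sum.distrib sum_distrib_left sum_distrib_right algebra_simps)
    also have "(\<Sum>i\<in>UNIV. \<Sum>j\<in>UNIV. Cd j i j * (Pd i * H + P * Hs i)) = (\<Sum>i\<in>UNIV. D i * Pd i) * H + P * (\<Sum>i\<in>UNIV. D i * Hs i)"
      unfolding D_def by (simp add: sum.distrib sum_distrib_left sum_distrib_right algebra_simps)
    also have "(\<Sum>i\<in>UNIV. \<Sum>j\<in>UNIV. Cd i i j * (Pd j * H + P * Hs j)) = (\<Sum>i\<in>UNIV. D i * Pd i) * H + P * (\<Sum>i\<in>UNIV. D i * Hs i)"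
      unfolding swapD by (simp add: sum.distrib sum_distrib_left sum_distrib_right algebra_simps)
    also have "(\<Sum>i\<in>UNIV. \<Sum>j\<in>UNIV. C i j * Pd j * Hs i) = (\<Sum>i\<in>UNIV. CP i * Hs i)"
      unfolding CP_def by (simp add: sum_distrib_right)
    also note swapC
    finally show ?thesis by simp
  qed
  have eqB: "(\<Sum>i\<in>UNIV. US i) =
      ((\<Sum>i\<in>UNIV. D i * Pd i) + (\<Sum>i\<in>UNIV. \<Sum>j\<in>UNIV. C i j * Pdd i j) + (\<Sum>i\<in>UNIV. \<Sum>j\<in>UNIV. Cdd i j) * P
         + (\<Sum>i\<in>UNIV. D i * Pd i) - (\<Sum>i\<in>UNIV. Md i) * P - (\<Sum>i\<in>UNIV. M i * Pd i)) * H
      + (\<Sum>i\<in>UNIV. CP i * Hs i) + P * (\<Sum>i\<in>UNIV. D i * Hs i) - P * (\<Sum>i\<in>UNIV. M i * Hs i)"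
  proof -
    have "(\<Sum>i\<in>UNIV. US i) =
      ((\<Sum>i\<in>UNIV. \<Sum>j\<in>UNIV. Cd i i j * Pd j) + (\<Sum>i\<in>UNIV. \<Sum>j\<in>UNIV. C i j * Pdd i j) + (\<Sum>i\<in>UNIV. \<Sum>j\<in>UNIV. Cdd i j) * P
         + (\<Sum>i\<in>UNIV. D i * Pd i) - (\<Sum>i\<in>UNIV. Md i) * P - (\<Sum>i\<in>UNIV. M i * Pd i)) * H
      + (\<Sum>i\<in>UNIV. CP i * Hs i) + P * (\<Sum>i\<in>UNIV. D i * Hs i) - P * (\<Sum>i\<in>UNIV. M i * Hs i)"
      unfolding US_def D_def CP_def
      by (simp add: sum.distrib sum_subtractf sum_distrib_left sum_distrib_right algebra_simps)
    thus ?thesis using swapD[of Pd] by simp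
  qed
  have eqC: "(\<Sum>i\<in>UNIV. TSN i) + (\<Sum>j\<in>UNIV. TNS j) =
     2 * ((\<Sum>i\<in>UNIV. Vd i i) * (P * H) + (\<Sum>i\<in>UNIV. V i * Pd i) * H + P * (\<Sum>i\<in>UNIV. V i * Hs i)
       + X * (\<Sum>i\<in>UNIV. Vd i i) * (P * Hx) + X * (\<Sum>i\<in>UNIV. V i * Pd i) * Hx
       + X * P * (\<Sum>i\<in>UNIV. V i * Hxs i))"
    unfolding TSN_def TNS_def WV WdV Hsym
    by (simp add: sum.distrib sum_distrib_left sum_distrib_right algebra_simps)
  have eqR: "(\<Sum>j\<in>UNIV. W j * Hs j + X * W j * Hxs j) = (\<Sum>i\<in>UNIV. V i * Hs i) + X * (\<Sum>i\<in>UNIV. V i * Hxs i)"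
    unfolding WV by (simp add: sum.distrib sum_distrib_left algebra_simps)
  have eqR2: "(\<Sum>i\<in>UNIV. V i * Hs i + X * V i * Hxs i) = (\<Sum>i\<in>UNIV. V i * Hs i) + X * (\<Sum>i\<in>UNIV. V i * Hxs i)"
    by (simp add: sum.distrib sum_distrib_left algebra_simps)
  have GP': "G * P = AA * P - (\<Sum>i\<in>UNIV. V i * Pd i) - P * (\<Sum>i\<in>UNIV. Vd i i)"
    using GP T unfolding CP_def Vd_def by simp
  have LZ': "(1/2) * (\<Sum>i\<in>UNIV. \<Sum>j\<in>UNIV. C i j * Pdd i j) - (\<Sum>i\<in>UNIV. M i * Pd i) + (\<Sum>i\<in>UNIV. D i * Pd i)
       - (\<Sum>i\<in>UNIV. Md i) * P + (1/2) * (\<Sum>i\<in>UNIV. \<Sum>j\<in>UNIV. Cdd i j) * P = 0"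
    using LZ unfolding D_def by (simp add: sum_subtractf left_diff_distrib algebra_simps)
  have UX': "UX = - (G * P) * H + FF * P * Hx - X * (G * P) * Hx"
    unfolding UX_def by (simp add: algebra_simps)
  have eqC': "(\<Sum>i\<in>UNIV. TSN i) = 2 * ((\<Sum>i\<in>UNIV. Vd i i) * (P * H) + (\<Sum>i\<in>UNIV. V i * Pd i) * H + P * (\<Sum>i\<in>UNIV. V i * Hs i)
       + X * (\<Sum>i\<in>UNIV. Vd i i) * (P * Hx) + X * (\<Sum>i\<in>UNIV. V i * Pd i) * Hx
       + X * P * (\<Sum>i\<in>UNIV. V i * Hxs i)) - (\<Sum>j\<in>UNIV. TNS j)"
    using eqC by simp
  have "(1/2) * ((\<Sum>i\<in>UNIV. \<Sum>j\<in>UNIV. TSS i j) + (\<Sum>i\<in>UNIV. TSN i) + (\<Sum>j\<in>UNIV. TNS j) + TNN)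
          - ((\<Sum>i\<in>UNIV. US i) + UX)
       - P * ((1/2) * ((\<Sum>i\<in>UNIV. \<Sum>j\<in>UNIV. C i j * Hss i j)
                 + (\<Sum>i\<in>UNIV. V i * Hs i + X * V i * Hxs i)
                 + (\<Sum>j\<in>UNIV. W j * Hs j + X * W j * Hxs j)
                 + (2 * X * Q * Hx + X * X * Q * Hxx))
              + (\<Sum>i\<in>UNIV. M i * Hs i) + (AA + Q) * H + (- FF + X * (AA + Q)) * Hx)
      = - H * ((1/2) * (\<Sum>i\<in>UNIV. \<Sum>j\<in>UNIV. C i j * Pdd i j) - (\<Sum>i\<in>UNIV. M i * Pd i) + (\<Sum>i\<in>UNIV. D i * Pd i)
       - (\<Sum>i\<in>UNIV. Md i) * P + (1/2) * (\<Sum>i\<in>UNIV. \<Sum>j\<in>UNIV. Cdd i j) * P)"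
    unfolding eqA eqB eqC' UX' GP' eqR eqR2 TNN_def
    by (simp add: algebra_simps)
  thus ?thesis using LZ' by simp
qed



lemma Ck2_D:
  assumes "open E" "Ck 2 E g" "w \<in> E"
  shows "g differentiable at w" "pd i g differentiable at w"
proof -
  have "Ck (Suc (Suc 0)) E g" using assms(2) by (simp add: numeral_2_eq_2)
  hence "g differentiable_on E" "pd i g differentiable_on E" by auto
  thus "g differentiable at w" "pd i g differentiable at w"
    using assms(1,3) differentiable_on_eq_differentiable_at by blast+
qed

lemma Ck1_D:
  assumes "open E" "Ck 1 E g" "w \<in> E"
  shows "g differentiable at w"
proof -
  have "Ck (Suc 0) E g" using assms(2) by simp
  hence "g differentiable_on E" by auto
  thus ?thesis using assms(1,3) differentiable_on_eq_differentiable_at by blast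
qed

lemma CkF2_D:
  assumes "open F" "CkF 2 F u"
  shows "C2F F u" "\<And>a b. continuous_on F (case_prod (pdo b (pdo a u)))"
proof -
  have c: "CkF (Suc (Suc 0)) F u" using assms(2) by (simp add: numeral_2_eq_2)
  hence d0: "case_prod u differentiable_on F" and d1: "\<And>a. case_prod (pdo a u) differentiable_on F"
    and cc: "\<And>a b. continuous_on F (case_prod (pdo b (pdo a u)))" by auto
  show "\<And>a b. continuous_on F (case_prod (pdo b (pdo a u)))" by (rule cc)
  have "C1F F v" if "case_prod v differentiable_on F" for v
    unfolding C1F_def
  proof (intro allI impI)
    fix w y a assume "(w, y) \<in> F"
    hence "case_prod v differentiable at (w, y)"
      using that assms(1) differentiable_on_eq_differentiable_at by blast
    thus "pdiff a v w y" by (rule pdiff_frechet)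
  qed
  thus "C2F F u" unfolding C2F_def using d0 d1 by blast
qed

declare pdo_Some_z[simp del]

lemma pdiff_div_aux: assumes "pdiff a u w y"
  shows "pdiff a (\<lambda>w y. u w y / k) w y \<and> pdo a (\<lambda>w y. u w y / k) w y = pdo a u w y / k"
proof -
  have "lineF a (\<lambda>w y. u w y / k) w y = (\<lambda>t. lineF a u w y t / k)"
    by (rule ext) (auto simp: lineF_def split: option.split)
  hence "(lineF a (\<lambda>w y. u w y / k) w y has_real_derivative pdo a u w y / k) (at 0)"
    using DERIV_cdivide[OF pdiff_D[OF assms]] by simp
  thus ?thesis by (rule pdiff_I)
qed
lemma pdiff_minus_aux: assumes "pdiff a u w y"
  shows "pdiff a (\<lambda>w y. - u w y) w y \<and> pdo a (\<lambda>w y. - u w y) w y = - pdo a u w y"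
proof -
  have "lineF a (\<lambda>w y. - u w y) w y = (\<lambda>t. - lineF a u w y t)"
    by (rule ext) (auto simp: lineF_def split: option.split)
  hence "(lineF a (\<lambda>w y. - u w y) w y has_real_derivative - pdo a u w y) (at 0)"
    using DERIV_minus[OF pdiff_D[OF assms]] by simp
  thus ?thesis by (rule pdiff_I)
qed
lemma pdiff_div[simp]: "pdiff a u w y \<Longrightarrow> pdiff a (\<lambda>w y. u w y / k) w y"
  using pdiff_div_aux by blast
lemma pdo_div[simp]: "pdiff a u w y \<Longrightarrow> pdo a (\<lambda>w y. u w y / k) w y = pdo a u w y / k"
  using pdiff_div_aux by blast
lemma pdiff_minus[simp]: "pdiff a u w y \<Longrightarrow> pdiff a (\<lambda>w y. - u w y) w y"
  using pdiff_minus_aux by blast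
lemma pdo_minus[simp]: "pdiff a u w y \<Longrightarrow> pdo a (\<lambda>w y. - u w y) w y = - pdo a u w y"
  using pdiff_minus_aux by blast

lemma sum_option: "(\<Sum>a\<in>(UNIV::'d::finite option set). g a) = g None + (\<Sum>i\<in>UNIV. g (Some i))"
proof -
  have "(UNIV::'d option set) = insert None (range Some)" by (rule UNIV_option_conv)
  moreover have "sum g (insert None (range Some)) = g None + sum g (range Some)"
    by (rule sum.insert) auto
  ultimately have "(\<Sum>a\<in>(UNIV::'d option set). g a) = g None + sum g (range Some)"
    by simp
  also have "sum g (range Some) = (\<Sum>i\<in>UNIV. g (Some i))"
    by (subst sum.reindex) (auto simp: inj_on_def)
  finally show ?thesis .
qed

locale setting =
  fixes E :: "(real^'d::finite) set"
    and c :: "real^'d \<Rightarrow> real^'d^'d"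
    and \<theta> m :: "real^'d \<Rightarrow> real^'d"
    and \<eta> :: "real^'d \<Rightarrow> real^'k::finite"
    and p a f :: "real^'d \<Rightarrow> real"
    and h :: "real^'d \<Rightarrow> real \<Rightarrow> real"
  assumes openE: "open E"
    and c2: "\<And>i j. Ck 2 E (\<lambda>z. c z $ i $ j)"
    and th2: "\<And>j. Ck 2 E (\<lambda>z. \<theta> z $ j)"
    and eta2: "\<And>k. Ck 2 E (\<lambda>z. \<eta> z $ k)"
    and p2: "Ck 2 E p"
    and m1: "\<And>i. Ck 1 E (\<lambda>z. m z $ i)"
    and csym: "\<And>z. z \<in> E \<Longrightarrow> transpose (c z) = c z"
    and ppos: "\<And>z. z \<in> E \<Longrightarrow> p z > 0"
    and LZ: "\<And>z. z \<in> E \<Longrightarrow> LZadj m c p z = 0"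
    and h2: "CkF 2 (E \<times> {0<..}) h"
    and hint: "\<forall>z\<in>E. \<forall>x>0. h z integrable_on {0..x}"
    and psi2: "CkF 2 (E \<times> {0<..}) (\<lambda>z x. integral {0..x} (h z))"
begin

lemma openF: "open (E \<times> {(0::real)<..})"
  using openE open_greaterThan[of "0::real"] by (rule open_Times)

lemmas pdo2_multF[simp] = pdo2_mult[OF openF]
lemmas pdo2_addF[simp] = pdo2_add[OF openF]
lemmas pdo2_diffF[simp] = pdo2_diff[OF openF]
lemmas pdo2_sumF[simp] = pdo2_sum[OF openF]
lemmas C2F_multF[simp] = C2F_mult[OF openF]
lemmas C2F_addF[simp] = C2F_add[OF openF]
lemmas C2F_diffF[simp] = C2F_diff[OF openF]
lemmas C2F_sumF[simp] = C2F_sum[OF openF]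

lemma dc: "w \<in> E \<Longrightarrow> (\<lambda>z. c z $ i $ j) differentiable at w" "w \<in> E \<Longrightarrow> pd k (\<lambda>z. c z $ i $ j) differentiable at w"
  using Ck2_D[OF openE c2] by auto
lemma dth: "w \<in> E \<Longrightarrow> (\<lambda>z. \<theta> z $ j) differentiable at w" "w \<in> E \<Longrightarrow> pd k (\<lambda>z. \<theta> z $ j) differentiable at w"
  using Ck2_D[OF openE th2] by auto
lemma deta: "w \<in> E \<Longrightarrow> (\<lambda>z. \<eta> z $ j) differentiable at w" "w \<in> E \<Longrightarrow> pd k (\<lambda>z. \<eta> z $ j) differentiable at w"
  using Ck2_D[OF openE eta2] by auto
lemma dp: "w \<in> E \<Longrightarrow> p differentiable at w" "w \<in> E \<Longrightarrow> pd k p differentiable at w"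
  using Ck2_D[OF openE p2] by auto
lemma dm: "w \<in> E \<Longrightarrow> (\<lambda>z. m z $ i) differentiable at w"
  using Ck1_D[OF openE m1] by auto

lemma C2F_c[simp]: "C2F (E \<times> {0<..}) (\<lambda>w y. c w $ i $ j)"
  by (rule C2F_z) (auto intro: dc)
lemma C2F_th[simp]: "C2F (E \<times> {0<..}) (\<lambda>w y. \<theta> w $ j)"
  by (rule C2F_z) (auto intro: dth)
lemma C2F_eta[simp]: "C2F (E \<times> {0<..}) (\<lambda>w y. \<eta> w $ j)"
  by (rule C2F_z) (auto intro: deta)
lemma C2F_p[simp]: "C2F (E \<times> {0<..}) (\<lambda>w y. p w)"
  by (rule C2F_z) (auto intro: dp)
lemma C2F_h[simp]: "C2F (E \<times> {0<..}) h"
  using CkF2_D[OF openF h2] by blast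

lemma C2F_pd1[simp]: "C2F (E \<times> {0<..}) u \<Longrightarrow> (w, y) \<in> E \<times> {0<..} \<Longrightarrow> pdiff o1 u w y"
  by (rule C2F_D1)
lemma C2F_pd2[simp]: "C2F (E \<times> {0<..}) u \<Longrightarrow> (w, y) \<in> E \<times> {0<..} \<Longrightarrow> pdiff o1 (pdo o2 u) w y"
  by (rule C2F_D2)

lemma zfun[simp]:
  "pdo (Some k) (\<lambda>w y. c w $ i $ j) = (\<lambda>w y. pd k (\<lambda>w. c w $ i $ j) w)"
  "pdo (Some k) (\<lambda>w y. \<theta> w $ j) = (\<lambda>w y. pd k (\<lambda>w. \<theta> w $ j) w)"
  "pdo (Some k) (\<lambda>w y. \<eta> w $ l') = (\<lambda>w y. pd k (\<lambda>w. \<eta> w $ l') w)"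
  "pdo (Some k) (\<lambda>w y. m w $ j) = (\<lambda>w y. pd k (\<lambda>w. m w $ j) w)"
  "pdo (Some k) (\<lambda>w y. p w) = (\<lambda>w y. pd k p w)"
  "pdo (Some k) (\<lambda>w y. pd l g w) = (\<lambda>w y. pd k (pd l g) w)"
  by (rule pdo_Some_z)+

lemma TSS:
  assumes z: "z \<in> E" and x: "x > 0"
  shows "pdo (Some i) (pdo (Some j) (\<lambda>w y. Amat c \<theta> \<eta> (Some i) (Some j) w y * (p w * h w y))) z x =
    pd i (pd j (\<lambda>w. c w $ i $ j)) z * (p z * h z x)
    + pd j (\<lambda>w. c w $ i $ j) z * (pd i p z * h z x + p z * pdo (Some i) h z x)
    + pd i (\<lambda>w. c w $ i $ j) z * (pd j p z * h z x + p z * pdo (Some j) h z x)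
    + c z $ i $ j * (pd i (pd j p) z * h z x + pd j p z * pdo (Some i) h z x
        + pd i p z * pdo (Some j) h z x + p z * pdo (Some i) (pdo (Some j) h) z x)"
  using z x by (simp add: Amat_def, (simp add: algebra_simps)?)


lemma pdiff_pd[simp]:
  "(w, y) \<in> E \<times> {0<..} \<Longrightarrow> pdiff o1 (\<lambda>w y. pd k (\<lambda>w. c w $ i $ j) w) w y"
  "(w, y) \<in> E \<times> {0<..} \<Longrightarrow> pdiff o1 (\<lambda>w y. pd k p w) w y"
  "(w, y) \<in> E \<times> {0<..} \<Longrightarrow> pdiff o1 (\<lambda>w y. m w $ i) w y"
  by (cases o1; auto intro!: pdiff_Some_z dc dp dm)+

lemma TSN:
  assumes z: "z \<in> E" and x: "x > 0"
  shows "pdo (Some i) (pdo None (\<lambda>w y. Amat c \<theta> \<eta> (Some i) None w y * (p w * h w y))) z x =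
    (\<Sum>j\<in>UNIV. pd i (\<lambda>w. c w $ i $ j) z * \<theta> z $ j + c z $ i $ j * pd i (\<lambda>w. \<theta> w $ j) z) * (p z * h z x)
    + (\<Sum>j\<in>UNIV. c z $ i $ j * \<theta> z $ j) * (pd i p z * h z x + p z * pdo (Some i) h z x)
    + x * (\<Sum>j\<in>UNIV. pd i (\<lambda>w. c w $ i $ j) z * \<theta> z $ j + c z $ i $ j * pd i (\<lambda>w. \<theta> w $ j) z) * (p z * pdo None h z x)
    + x * (\<Sum>j\<in>UNIV. c z $ i $ j * \<theta> z $ j) * (pd i p z * pdo None h z x + p z * pdo (Some i) (pdo None h) z x)"
  using z x by (simp add: Amat_def matrix_vector_mult_def, (simp add: algebra_simps)?)

lemma TNS:
  assumes z: "z \<in> E" and x: "x > 0"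
  shows "pdo None (pdo (Some j) (\<lambda>w y. Amat c \<theta> \<eta> None (Some j) w y * (p w * h w y))) z x =
    (\<Sum>i\<in>UNIV. pd j (\<lambda>w. \<theta> w $ i) z * c z $ i $ j + \<theta> z $ i * pd j (\<lambda>w. c w $ i $ j) z) * (p z * h z x)
    + x * (\<Sum>i\<in>UNIV. pd j (\<lambda>w. \<theta> w $ i) z * c z $ i $ j + \<theta> z $ i * pd j (\<lambda>w. c w $ i $ j) z) * (p z * pdo None h z x)
    + (\<Sum>i\<in>UNIV. \<theta> z $ i * c z $ i $ j) * (pd j p z * h z x + p z * pdo (Some j) h z x)
    + x * (\<Sum>i\<in>UNIV. \<theta> z $ i * c z $ i $ j) * (pd j p z * pdo None h z x + p z * pdo None (pdo (Some j) h) z x)"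
  using z x by (simp add: Amat_def vector_matrix_mult_def, (simp add: algebra_simps)?)

lemma TNN:
  assumes z: "z \<in> E" and x: "x > 0"
  shows "pdo None (pdo None (\<lambda>w y. Amat c \<theta> \<eta> None None w y * (p w * h w y))) z x =
    2 * (\<theta> z \<bullet> (c z *v \<theta> z) + \<eta> z \<bullet> \<eta> z) * (p z * h z x)
    + 2 * (2 * x * (\<theta> z \<bullet> (c z *v \<theta> z) + \<eta> z \<bullet> \<eta> z)) * (p z * pdo None h z x)
    + x * x * (\<theta> z \<bullet> (c z *v \<theta> z) + \<eta> z \<bullet> \<eta> z) * (p z * pdo None (pdo None h) z x)"
  using z x by (simp add: Amat_def power2_eq_square matrix_vector_mult_def inner_vec_def, (simp add: algebra_simps)?)


lemma pd_pdo: "pd i g z = pdo (Some i) (\<lambda>w y. g w) z x"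
  by (simp add: pdo_Some_z)

lemma US:
  assumes z: "z \<in> E" and x: "x > 0"
  shows "pdo (Some i) (\<lambda>w y. bR m c a \<theta> f p (Some i) w y * (p w * h w y)) z x =
    ((\<Sum>j\<in>UNIV. pd i (\<lambda>w. c w $ i $ j) z * pd j p z + c z $ i $ j * pd i (pd j p) z)
      + (\<Sum>j\<in>UNIV. pd i (pd j (\<lambda>w. c w $ i $ j)) z) * p z
      + (\<Sum>j\<in>UNIV. pd j (\<lambda>w. c w $ i $ j) z) * pd i p z
      - (pd i (\<lambda>w. m w $ i) z * p z + m z $ i * pd i p z)) * h z x
    + ((\<Sum>j\<in>UNIV. c z $ i $ j * pd j p z) + (\<Sum>j\<in>UNIV. pd j (\<lambda>w. c w $ i $ j) z) * p z - m z $ i * p z)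
      * pdo (Some i) h z x" (is "_ = ?R")
proof -
  have eq: "bR m c a \<theta> f p (Some i) w y * (p w * h w y) =
     ((\<Sum>j\<in>UNIV. c w $ i $ j * pd j p w) + (\<Sum>j\<in>UNIV. pd j (\<lambda>w. c w $ i $ j) w) * p w - m w $ i * p w) * h w y"
    if "(w, y) \<in> E \<times> {0<..}" for w y
  proof -
    have pw: "p w > 0" using that ppos by auto
    show ?thesis
      unfolding bR_def using pw
      by (simp add: matrix_vector_mult_def grad_def divc_def field_simps sum_distrib_left sum_divide_distrib)
  qed
  have "pdo (Some i) (\<lambda>w y. bR m c a \<theta> f p (Some i) w y * (p w * h w y)) z x =
    pdo (Some i) (\<lambda>w y. ((\<Sum>j\<in>UNIV. c w $ i $ j * pd j p w) + (\<Sum>j\<in>UNIV. pd j (\<lambda>w. c w $ i $ j) w) * p w - m w $ i * p w) * h w y) z x"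
    using z x by (intro pdo_cong[OF openF] eq) auto
  also have "\<dots> = ?R"
    using z x by (simp, (simp add: algebra_simps)?)
  finally show ?thesis .
qed

lemma UX:
  assumes z: "z \<in> E" and x: "x > 0"
  shows "pdo None (\<lambda>w y. bR m c a \<theta> f p None w y * (p w * h w y)) z x =
    - (a z - \<theta> z \<bullet> ((c z *v grad p z) /\<^sub>R p z) - vdiv (\<lambda>w. c w *v \<theta> w) z) * (p z * h z x)
    + (f z - x * (a z - \<theta> z \<bullet> ((c z *v grad p z) /\<^sub>R p z) - vdiv (\<lambda>w. c w *v \<theta> w) z)) * (p z * pdo None h z x)"
  using z x by (simp add: bR_def, (simp add: algebra_simps)?)

lemma Csym: "z \<in> E \<Longrightarrow> c z $ i $ j = c z $ j $ i"
proof -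
  assume z: "z \<in> E"
  have "transpose (c z) $ i $ j = c z $ j $ i" by (simp add: transpose_def)
  thus ?thesis using csym[OF z] by simp
qed

lemma Cdsym: assumes "z \<in> E" shows "pd k (\<lambda>w. c w $ i $ j) z = pd k (\<lambda>w. c w $ j $ i) z"
proof -
  have "pd k (\<lambda>w. c w $ i $ j) z = pdo (Some k) (\<lambda>w y. c w $ i $ j) z 1" by (rule pd_pdo)
  also have "\<dots> = pdo (Some k) (\<lambda>w y. c w $ j $ i) z 1"
    using assms by (intro pdo_cong[OF openF]) (auto simp: Csym)
  also have "\<dots> = pd k (\<lambda>w. c w $ j $ i) z" by (rule pd_pdo[symmetric])
  finally show ?thesis .
qed

lemma vdiv_eq: assumes "z \<in> E"
  shows "vdiv (\<lambda>w. c w *v \<theta> w) z = (\<Sum>i\<in>UNIV. \<Sum>j\<in>UNIV. pd i (\<lambda>w. c w $ i $ j) z * \<theta> z $ j + c z $ i $ j * pd i (\<lambda>w. \<theta> w $ j) z)"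
proof -
  have "pd i (\<lambda>w. (c w *v \<theta> w) $ i) z = (\<Sum>j\<in>UNIV. pd i (\<lambda>w. c w $ i $ j) z * \<theta> z $ j + c z $ i $ j * pd i (\<lambda>w. \<theta> w $ j) z)" (is "_ = ?R") for i
  proof -
    have "pd i (\<lambda>w. (c w *v \<theta> w) $ i) z = pdo (Some i) (\<lambda>w y. \<Sum>j\<in>UNIV. c w $ i $ j * \<theta> w $ j) z 1"
      by (simp add: pd_pdo[of i _ z 1] matrix_vector_mult_def)
    also have "\<dots> = ?R" using assms by simp
    finally show ?thesis .
  qed
  thus ?thesis unfolding vdiv_def by simp
qed

lemma GP: assumes z: "z \<in> E"
  shows "(a z - \<theta> z \<bullet> ((c z *v grad p z) /\<^sub>R p z) - vdiv (\<lambda>w. c w *v \<theta> w) z) * p z =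
    a z * p z - (\<Sum>i\<in>UNIV. \<theta> z $ i * (\<Sum>j\<in>UNIV. c z $ i $ j * pd j p z))
    - p z * (\<Sum>i\<in>UNIV. \<Sum>j\<in>UNIV. pd i (\<lambda>w. c w $ i $ j) z * \<theta> z $ j + c z $ i $ j * pd i (\<lambda>w. \<theta> w $ j) z)"
proof -
  have pz: "p z > 0" using ppos z by auto
  have "\<theta> z \<bullet> ((c z *v grad p z) /\<^sub>R p z) = (\<Sum>i\<in>UNIV. \<theta> z $ i * (\<Sum>j\<in>UNIV. c z $ i $ j * pd j p z)) / p z"
  proof -
    have "\<theta> z \<bullet> ((c z *v grad p z) /\<^sub>R p z) = (\<theta> z \<bullet> (c z *v grad p z)) / p z"
      by (simp add: divide_inverse mult.commute)
    also have "\<theta> z \<bullet> (c z *v grad p z) = (\<Sum>i\<in>UNIV. \<theta> z $ i * (\<Sum>j\<in>UNIV. c z $ i $ j * pd j p z))"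
      by (simp add: inner_vec_def matrix_vector_mult_def grad_def)
    finally show ?thesis .
  qed
  thus ?thesis using pz unfolding vdiv_eq[OF z] by (simp add: field_simps)
qed


abbreviation psi :: "real^'d \<Rightarrow> real \<Rightarrow> real" where "psi \<equiv> (\<lambda>z x. integral {0..x} (h z))"

lemma C2F_psi[simp]: "C2F (E \<times> {0<..}) psi"
  using CkF2_D[OF openF psi2] by blast

lemma cont_psi: "continuous_on (E \<times> {0<..}) (case_prod (pdo o2 (pdo o1 psi)))"
  using CkF2_D[OF openF psi2] by blast

lemma cont_h: "continuous_on (E \<times> {0<..}) (case_prod (pdo o2 (pdo o1 h)))"
  using CkF2_D[OF openF h2] by blast

lemma FTC: assumes wy: "(w, y) \<in> E \<times> {0<..}" shows "pdo None psi w y = h w y"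
proof -
  have w: "w \<in> E" and y: "y > 0" using wy by auto
  have int: "h w integrable_on {0..y+1}" using hint w y by simp
  have "(lineF None h w y has_real_derivative pdo None h w y) (at 0)"
    using pdiff_D C2F_pd1[OF C2F_h wy] by blast
  moreover have "lineF None h w y = (\<lambda>t. h w (t + y))"
    by (rule ext) (simp add: lineF_def add.commute)
  ultimately have "((\<lambda>t. h w (t + y)) has_real_derivative pdo None h w y) (at 0)"
    by simp
  hence "(h w has_real_derivative pdo None h w y) (at (0 + y))"
    by (simp only: DERIV_shift)
  hence cont: "isCont (h w) y" using DERIV_isCont by simp
  have "((\<lambda>u. integral {0..u} (h w)) has_vector_derivative h w y) (at y within ({0..y+1} - {}))"
    using y cont
    by (intro integral_has_vector_derivative_continuous_at[OF int])
       (auto intro: continuous_at_imp_continuous_within)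
  moreover have "at y within ({0..y+1} - {}) = at y"
    using y by (intro at_within_interior) simp
  ultimately have "((\<lambda>u. integral {0..u} (h w)) has_real_derivative h w y) (at y)"
    by (simp add: has_real_derivative_iff_has_vector_derivative)
  thus ?thesis unfolding pdo_def by (simp add: DERIV_imp_deriv)
qed

lemma psiS: assumes wy: "(w, y) \<in> E \<times> {0<..}"
  shows "pdiff None (pdo (Some j) psi) w y \<and> pdo None (pdo (Some j) psi) w y = pdo (Some j) h w y"
proof -
  have "pdiff None (pdo (Some j) psi) w y \<and> pdo None (pdo (Some j) psi) w y = pdo (Some j) (pdo None psi) w y"
    by (rule peano_pdo[OF openF wy]) (auto simp: cont_psi)
  moreover have "pdo (Some j) (pdo None psi) w y = pdo (Some j) h w y"
    using wy by (intro pdo_cong[OF openF]) (auto simp: FTC)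
  ultimately show ?thesis by simp
qed

lemma psiSS: assumes wy: "(z, x) \<in> E \<times> {0<..}"
  shows "pdiff None (pdo (Some i) (pdo (Some j) psi)) z x \<and>
         pdo None (pdo (Some i) (pdo (Some j) psi)) z x = pdo (Some i) (pdo (Some j) h) z x"
proof -
  have eq: "pdo None (pdo (Some j) psi) w y = pdo (Some j) h w y" if "(w, y) \<in> E \<times> {0<..}" for w y
    using psiS[OF that] by blast
  have eq2: "pdo (Some i) (pdo None (pdo (Some j) psi)) w y = pdo (Some i) (pdo (Some j) h) w y"
    if "(w, y) \<in> E \<times> {0<..}" for w y
    using that by (intro pdo_cong[OF openF] eq)
  have "pdiff None (pdo (Some i) (pdo (Some j) psi)) z x \<and>
        pdo None (pdo (Some i) (pdo (Some j) psi)) z x = pdo (Some i) (pdo None (pdo (Some j) psi)) z x"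
  proof (rule peano_pdo[OF openF wy])
    fix w :: "real^'d" and y :: real assume wy': "(w, y) \<in> E \<times> {0<..}"
    show "pdiff (Some i) (pdo (Some j) psi) w y" using wy' by simp
    show "pdiff None (pdo (Some j) psi) w y" using wy' by simp
    show "pdiff (Some i) (pdo None (pdo (Some j) psi)) w y"
      using pdiff_cong[OF openF wy' eq, where a="Some i"] wy' by simp
  next
    show "continuous_on (E \<times> {0<..}) (case_prod (pdo (Some i) (pdo None (pdo (Some j) psi))))"
      using cont_h[of "Some i" "Some j"] by (rule continuous_on_cong[THEN iffD2, OF refl, rotated]) (auto simp: eq2)
  qed
  thus ?thesis using eq2[OF wy] by simp
qed

lemma Hsym: assumes wy: "(z, x) \<in> E \<times> {0<..}"
  shows "pdo (Some i) (pdo None h) z x = pdo None (pdo (Some i) h) z x"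
  using peano_pdo[OF openF wy, of i h] by (auto simp: cont_h)

lemma psi_vals:
  assumes z: "z \<in> E" and x: "x > 0"
  shows "pdo None psi z x = h z x"
    "pdo (Some i) (pdo None psi) z x = pdo (Some i) h z x"
    "pdo None (pdo (Some i) psi) z x = pdo (Some i) h z x"
    "pdo None (pdo None psi) z x = pdo None h z x"
    "pdiff None psi z x"
    "pdiff None (pdo (Some i) psi) z x"
    "pdiff None (pdo (Some i) (pdo (Some j) psi)) z x"
    "pdo None (pdo (Some i) (pdo (Some j) psi)) z x = pdo (Some i) (pdo (Some j) h) z x"
    "pdiff None (pdo (Some i) (pdo None psi)) z x"
    "pdo None (pdo (Some i) (pdo None psi)) z x = pdo None (pdo (Some i) h) z x"
    "pdiff None (pdo None (pdo (Some i) psi)) z x"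
    "pdo None (pdo None (pdo (Some i) psi)) z x = pdo None (pdo (Some i) h) z x"
    "pdiff None (pdo None (pdo None psi)) z x"
    "pdo None (pdo None (pdo None psi)) z x = pdo None (pdo None h) z x"
proof -
  have zx: "(z, x) \<in> E \<times> {0<..}" using z x by simp
  have e1: "pdo None psi w y = h w y" if "(w, y) \<in> E \<times> {0<..}" for w y using FTC[OF that] .
  have e2: "pdo o1 (pdo None psi) w y = pdo o1 h w y" if "(w, y) \<in> E \<times> {0<..}" for w y o1
    using that by (intro pdo_cong[OF openF] e1)
  have e3: "pdo None (pdo (Some i) psi) w y = pdo (Some i) h w y" if "(w, y) \<in> E \<times> {0<..}" for w y
    using psiS[OF that] by blast
  show "pdo None psi z x = h z x" by (rule e1[OF zx])
  show "pdo (Some i) (pdo None psi) z x = pdo (Some i) h z x" by (rule e2[OF zx])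
  show "pdo None (pdo (Some i) psi) z x = pdo (Some i) h z x" by (rule e3[OF zx])
  show "pdo None (pdo None psi) z x = pdo None h z x" by (rule e2[OF zx])
  show "pdiff None psi z x" using zx by simp
  show "pdiff None (pdo (Some i) psi) z x" using zx by simp
  show "pdiff None (pdo (Some i) (pdo (Some j) psi)) z x" using psiSS[OF zx] by blast
  show "pdo None (pdo (Some i) (pdo (Some j) psi)) z x = pdo (Some i) (pdo (Some j) h) z x" using psiSS[OF zx] by blast
  show "pdiff None (pdo (Some i) (pdo None psi)) z x"
    using pdiff_cong[OF openF zx e2, where a=None] zx by simp
  show "pdo None (pdo (Some i) (pdo None psi)) z x = pdo None (pdo (Some i) h) z x"
    using zx by (intro pdo_cong[OF openF] e2)
  show "pdiff None (pdo None (pdo (Some i) psi)) z x"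
    using pdiff_cong[OF openF zx e3, where a=None] zx by simp
  show "pdo None (pdo None (pdo (Some i) psi)) z x = pdo None (pdo (Some i) h) z x"
    using zx by (intro pdo_cong[OF openF] e3)
  show "pdiff None (pdo None (pdo None psi)) z x"
    using pdiff_cong[OF openF zx e2, where a=None] zx by simp
  show "pdo None (pdo None (pdo None psi)) z x = pdo None (pdo None h) z x"
    using zx by (intro pdo_cong[OF openF] e2)
qed


lemma RHS:
  assumes z: "z \<in> E" and x: "x > 0"
  shows "pdo None (genOp (Amat c \<theta> \<eta>) (bL m c a \<theta> \<eta> f) psi) z x =
    1 / 2 *
     ((\<Sum>i\<in>UNIV. \<Sum>j\<in>UNIV. c z $ i $ j * pdo (Some i) (pdo (Some j) h) z x) +
      (\<Sum>i\<in>UNIV.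
         (\<Sum>j\<in>UNIV. c z $ i $ j * \<theta> z $ j) * pdo (Some i) h z x +
         x * (\<Sum>j\<in>UNIV. c z $ i $ j * \<theta> z $ j) * pdo None (pdo (Some i) h) z x) +
      (\<Sum>j\<in>UNIV.
         (\<Sum>i\<in>UNIV. \<theta> z $ i * c z $ i $ j) * pdo (Some j) h z x +
         x * (\<Sum>i\<in>UNIV. \<theta> z $ i * c z $ i $ j) * pdo None (pdo (Some j) h) z x) +
      (2 * x * (\<theta> z \<bullet> (c z *v \<theta> z) + \<eta> z \<bullet> \<eta> z) * pdo None h z x
        + x * x * (\<theta> z \<bullet> (c z *v \<theta> z) + \<eta> z \<bullet> \<eta> z) * pdo None (pdo None h) z x)) +
     (\<Sum>i\<in>UNIV. m z $ i * pdo (Some i) h z x) +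
     (a z + (\<theta> z \<bullet> (c z *v \<theta> z) + \<eta> z \<bullet> \<eta> z)) * h z x +
     (- f z + x * (a z + (\<theta> z \<bullet> (c z *v \<theta> z) + \<eta> z \<bullet> \<eta> z))) * pdo None h z x"
proof -
  have gen: "genOp (Amat c \<theta> \<eta>) (bL m c a \<theta> \<eta> f) psi =
    (\<lambda>w y. (1/2) * (\<Sum>o1\<in>UNIV. \<Sum>o2\<in>UNIV. Amat c \<theta> \<eta> o1 o2 w y * pdo o1 (pdo o2 psi) w y)
        + (\<Sum>o1\<in>UNIV. bL m c a \<theta> \<eta> f o1 w y * pdo o1 psi w y))"
    by (intro ext) (simp only: genOp_def)
  show ?thesis
    unfolding gen
    using z x
    by (simp add: sum_option Amat_def bL_def psi_vals[OF z x] matrix_vector_mult_def vector_matrix_mult_def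
        power2_eq_square, (simp add: algebra_simps sum.distrib)?)
qed

lemma main:
  assumes z: "z \<in> E" and x: "x > 0"
  shows "adjOp (Amat c \<theta> \<eta>) (bR m c a \<theta> f p) (\<lambda>z x. p z * h z x) z x
       = p z * pdo None (genOp (Amat c \<theta> \<eta>) (bL m c a \<theta> \<eta> f) psi) z x"
proof -
  have zx: "(z, x) \<in> E \<times> {0<..}" using z x by simp
  have lhs: "adjOp (Amat c \<theta> \<eta>) (bR m c a \<theta> f p) (\<lambda>z x. p z * h z x) z x =
     1/2 * ((\<Sum>i\<in>UNIV. \<Sum>j\<in>UNIV. pdo (Some i) (pdo (Some j) (\<lambda>w y. Amat c \<theta> \<eta> (Some i) (Some j) w y * (p w * h w y))) z x)
       + (\<Sum>i\<in>UNIV. pdo (Some i) (pdo None (\<lambda>w y. Amat c \<theta> \<eta> (Some i) None w y * (p w * h w y))) z x)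
       + (\<Sum>j\<in>UNIV. pdo None (pdo (Some j) (\<lambda>w y. Amat c \<theta> \<eta> None (Some j) w y * (p w * h w y))) z x)
       + pdo None (pdo None (\<lambda>w y. Amat c \<theta> \<eta> None None w y * (p w * h w y))) z x)
     - ((\<Sum>i\<in>UNIV. pdo (Some i) (\<lambda>w y. bR m c a \<theta> f p (Some i) w y * (p w * h w y)) z x)
        + pdo None (\<lambda>w y. bR m c a \<theta> f p None w y * (p w * h w y)) z x)"
    by (simp only: adjOp_def sum_option sum.distrib add_ac)
  have LZz: "1 / 2 * (\<Sum>i\<in>UNIV. \<Sum>j\<in>UNIV. c z $ i $ j * pd i (pd j p) z) -
      (\<Sum>i\<in>UNIV. (m z $ i - (\<Sum>j\<in>UNIV. pd j (\<lambda>w. c w $ i $ j) z)) * pd i p z) -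
      ((\<Sum>i\<in>UNIV. pd i (\<lambda>w. m w $ i) z) - 1 / 2 * (\<Sum>i\<in>UNIV. \<Sum>j\<in>UNIV. pd i (pd j (\<lambda>w. c w $ i $ j)) z)) * p z = 0"
    using LZ[OF z] unfolding LZadj_def by simp
  note alg = alg_main[where C="\<lambda>i j. c z $ i $ j" and Cd="\<lambda>k i j. pd k (\<lambda>w. c w $ i $ j) z"
      and Cdd="\<lambda>i j. pd i (pd j (\<lambda>w. c w $ i $ j)) z" and Pdd="\<lambda>i j. pd i (pd j p) z"
      and Hss="\<lambda>i j. pdo (Some i) (pdo (Some j) h) z x" and Thd="\<lambda>k j. pd k (\<lambda>w. \<theta> w $ j) z"
      and Pd="\<lambda>i. pd i p z" and Hs="\<lambda>i. pdo (Some i) h z x" and Hsx="\<lambda>i. pdo (Some i) (pdo None h) z x"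
      and Hxs="\<lambda>i. pdo None (pdo (Some i) h) z x" and M="\<lambda>i. m z $ i" and Md="\<lambda>i. pd i (\<lambda>w. m w $ i) z"
      and Th="\<lambda>j. \<theta> z $ j" and P="p z" and H="h z x" and Hx="pdo None h z x" and Hxx="pdo None (pdo None h) z x"
      and X=x and Q="\<theta> z \<bullet> (c z *v \<theta> z) + \<eta> z \<bullet> \<eta> z" and AA="a z" and FF="f z"
      and G="a z - \<theta> z \<bullet> ((c z *v grad p z) /\<^sub>R p z) - vdiv (\<lambda>w. c w *v \<theta> w) z",
      OF Csym[OF z] Cdsym[OF z] Hsym[OF zx] LZz GP[OF z]]
  show ?thesis
    unfolding lhs TSS[OF z x] TSN[OF z x] TNS[OF z x] TNN[OF z x] US[OF z x] UX[OF z x] RHS[OF z x]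
    by (rule alg)
qed

end

theorem lemmaA1:
  fixes E :: "(real^'d::finite) set"
    and \<gamma> \<epsilon> :: real
    and m \<theta> :: "real^'d \<Rightarrow> real^'d"
    and c :: "real^'d \<Rightarrow> real^'d^'d"
    and p a f :: "real^'d \<Rightarrow> real"
    and \<eta> :: "real^'d \<Rightarrow> real^'k::finite"
    and h :: "real^'d \<Rightarrow> real \<Rightarrow> real"
  assumes gamma: "0 < \<gamma>" "\<gamma> \<le> 1"
    and E: "open E" "connected E"
    and A2: "Ckg_vec 1 \<gamma> E m" "Ckg_mat 2 \<gamma> E c" "\<forall>z\<in>E. spd (c z)"
    and A3: "\<forall>z\<in>E. p z > 0" "Ckg 2 \<gamma> E p" "set_integrable lborel E p"
            "(LINT z:E|lborel. p z) = 1" "\<forall>z\<in>E. LZadj m c p z = 0"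
    and A4: "Ckg 1 \<gamma> E a" "\<forall>z\<in>E. a z \<ge> 0" "Ckg_vec 2 \<gamma> E \<eta>" "Ckg_vec 2 \<gamma> E \<theta>"
    and A5: "\<forall>z\<in>E. f z \<ge> 0" "set_integrable lborel E (\<lambda>z. f z * p z)"
            "(LINT z:E|lborel. f z * p z) > 0" "\<epsilon> > 0"
            "set_integrable lborel E (\<lambda>z. max 0 (- (a z + (1 - \<epsilon>) / 2 *
                 (\<theta> z \<bullet> (c z *v \<theta> z) + \<eta> z \<bullet> \<eta> z))) * p z)"
            "(\<integral>\<^sup>+z\<in>E. ennreal (max 0 (a z + (1 - \<epsilon>) / 2 *
                 (\<theta> z \<bullet> (c z *v \<theta> z) + \<eta> z \<bullet> \<eta> z)) * p z) \<partial>lborel)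
             > (\<integral>\<^sup>+z\<in>E. ennreal (max 0 (- (a z + (1 - \<epsilon>) / 2 *
                 (\<theta> z \<bullet> (c z *v \<theta> z) + \<eta> z \<bullet> \<eta> z))) * p z) \<partial>lborel)"
    and eta_pos: "\<forall>z\<in>E. norm (\<eta> z) > 0"
    and f_C2: "Ck 2 E f"
    and h_C2: "CkF 2 (E \<times> {0<..}) h"
    and psi_def: "\<forall>z\<in>E. \<forall>x>0. h z integrable_on {0..x}"
    and psi_C2: "CkF 2 (E \<times> {0<..}) (\<lambda>z x. integral {0..x} (h z))"
  shows "(\<forall>z\<in>E. \<forall>x>0.
            adjOp (Amat c \<theta> \<eta>) (bR m c a \<theta> f p) (\<lambda>z x. p z * h z x) z x
            = p z * pdo None (genOp (Amat c \<theta> \<eta>) (bL m c a \<theta> \<eta> f)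
                                    (\<lambda>z x. integral {0..x} (h z))) z x)
       \<and> ((\<forall>z\<in>E. \<forall>x>0. genOp (Amat c \<theta> \<eta>) (bL m c a \<theta> \<eta> f)
                                 (\<lambda>z x. integral {0..x} (h z)) z x = 0)
           \<longrightarrow> (\<forall>z\<in>E. \<forall>x>0.
                 adjOp (Amat c \<theta> \<eta>) (bR m c a \<theta> f p) (\<lambda>z x. p z * h z x) z x = 0))"
  proof -
  interpret S: setting E c \<theta> m \<eta> p a f h
  proof (unfold_locales)
    show "open E" by (rule E(1))
    show "Ck 2 E (\<lambda>z. c z $ i $ j)" for i j using A2(2) unfolding Ckg_mat_def Ckg_def by blast
    show "Ck 2 E (\<lambda>z. \<theta> z $ j)" for j using A4(4) unfolding Ckg_vec_def Ckg_def by blast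
    show "Ck 2 E (\<lambda>z. \<eta> z $ k)" for k using A4(3) unfolding Ckg_vec_def Ckg_def by blast
    show "Ck 2 E p" using A3(2) unfolding Ckg_def by blast
    show "Ck 1 E (\<lambda>z. m z $ i)" for i using A2(1) unfolding Ckg_vec_def Ckg_def by blast
    show "transpose (c z) = c z" if "z \<in> E" for z using A2(3) that unfolding spd_def by blast
    show "p z > 0" if "z \<in> E" for z using A3(1) that by blast
    show "LZadj m c p z = 0" if "z \<in> E" for z using A3(5) that by blast
    show "CkF 2 (E \<times> {0<..}) h" by (rule h_C2)
    show "\<forall>z\<in>E. \<forall>x>0. h z integrable_on {0..x}" by (rule psi_def)
    show "CkF 2 (E \<times> {0<..}) (\<lambda>z x. integral {0..x} (h z))" by (rule psi_C2)
  qed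
  have part1: "\<forall>z\<in>E. \<forall>x>0.
            adjOp (Amat c \<theta> \<eta>) (bR m c a \<theta> f p) (\<lambda>z x. p z * h z x) z x
            = p z * pdo None (genOp (Amat c \<theta> \<eta>) (bL m c a \<theta> \<eta> f)
                                    (\<lambda>z x. integral {0..x} (h z))) z x"
    using S.main by blast
  have part2: "adjOp (Amat c \<theta> \<eta>) (bR m c a \<theta> f p) (\<lambda>z x. p z * h z x) z x = 0"
    if H: "\<forall>z\<in>E. \<forall>x>0. genOp (Amat c \<theta> \<eta>) (bL m c a \<theta> \<eta> f) (\<lambda>z x. integral {0..x} (h z)) z x = 0"
      and z: "z \<in> E" and x: "x > 0" for z x
  proof -
    have "pdo None (genOp (Amat c \<theta> \<eta>) (bL m c a \<theta> \<eta> f) (\<lambda>z x. integral {0..x} (h z))) z x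
        = pdo None (\<lambda>w y. 0) z x"
      using H z x by (intro pdo_cong[OF S.openF]) auto
    thus ?thesis using part1 z x by simp
  qed
  show ?thesis using part1 part2 by blast
qed

end
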